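(* Let $\mathsf M=\mathrm{diag}(M_1,\dots,M_N)$ and $\bar{\mathsf M}=\mathrm{diag}(\bar M_1,\dots,\bar M_N)$ be real diagonal matrices, $|\alpha\rangle,|\bar\alpha\rangle$ real $N$-columns, $\langle a|,\langle\bar a|$ real $N$-rows, and let $\mathsf A,\bar{\mathsf A}$ be real $N\times N$ matrices satisfying $$\bar{\mathsf M}\mathsf A-\mathsf A\mathsf M=|\alpha\rangle\langle a|,\qquad \mathsf M\bar{\mathsf A}-\bar{\mathsf A}\bar{\mathsf M}=|\bar\alpha\rangle\langle\bar a|.$$ For a real $\zeta$ with $\zeta\neq\pm M_j$, $\zeta\neq\pm\bar M_j$ for all $j$, let $\mathsf H_\zeta=(\mathsf M-\zeta)(\mathsf M+\zeta)^{-1}$ and $\bar{\mathsf H}_\zeta=(\bar{\mathsf M}+\zeta)(\bar{\mathsf M}-\zeta)^{-1}$, and for a finite set $X$ of such parameters let $\mathsf H_X=\prod_{\xi\in X}\mathsf H_\xi$, $\bar{\mathsf H}_X=\prod_{\xi\in X}\bar{\mathsf H}_\xi$ and $$\tau_X=\det\big(\mathsf 1+\mathsf A\mathsf H_X\,\bar{\mathsf A}\bar{\mathsf H}_X\big),\qquad \tau=\tau_\emptyset=\det(\mathsf 1+\mathsf A\bar{\mathsf A}).$$ Then for all pairwise distinct such parameters $\alpha,\beta,\gamma$, $$\tau\,\tau_{\{\alpha,\beta,\gamma\}}=\Gamma_{\alpha,\beta\gamma}\,\tau_{\{\alpha\}}\tau_{\{\beta,\gamma\}}+\Gamma_{\beta,\alpha\gamma}\,\tau_{\{\beta\}}\tau_{\{\alpha,\gamma\}}+\Gamma_{\gamma,\alpha\beta}\,\tau_{\{\gamma\}}\tau_{\{\alpha,\beta\}},$$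 where $\Gamma_{\xi,\eta\zeta}=\dfrac{(\xi+\eta)(\xi+\zeta)}{(\xi-\eta)(\xi-\zeta)}$.
   Context: $\mathsf 1$ is the $N\times N$ identity matrix and $\mathsf M-\zeta$ means $\mathsf M-\zeta\mathsf 1$. The matrices $\mathsf H_\xi$, $\bar{\mathsf H}_\xi$ are diagonal, hence commute with each other. This equation is called the Miwa (discrete BKP) equation. *)

theory Defs
  imports "HOL-Analysis.Analysis"
begin

definition diagm :: "real ^ 'n \<Rightarrow> real ^ 'n ^ 'n" where
  "diagm m = (\<chi> i j. if i = j then m $ i else 0)"

definition outer :: "real ^ 'n \<Rightarrow> real ^ 'n \<Rightarrow> real ^ 'n ^ 'n" where
  "outer p q = (\<chi> i j. p $ i * q $ j)"

definition Hmat :: "real ^ 'n \<Rightarrow> real \<Rightarrow> real ^ 'n ^ 'n" where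
  "Hmat m z = (diagm m - z *\<^sub>R mat 1) ** matrix_inv (diagm m + z *\<^sub>R mat 1)"

definition Hbarmat :: "real ^ 'n \<Rightarrow> real \<Rightarrow> real ^ 'n ^ 'n" where
  "Hbarmat mb z = (diagm mb + z *\<^sub>R mat 1) ** matrix_inv (diagm mb - z *\<^sub>R mat 1)"

text \<open>Product over a finite set of parameters (the factors commute, the order used is
  the increasing order of the parameters).\<close>
definition setprod_mat :: "(real \<Rightarrow> real ^ 'n ^ 'n) \<Rightarrow> real set \<Rightarrow> real ^ 'n ^ 'n" where
  "setprod_mat F X = foldr (\<lambda>\<xi> P. F \<xi> ** P) (sorted_list_of_set X) (mat 1)"

definition tau :: "real ^ 'n \<Rightarrow> real ^ 'n \<Rightarrow> real ^ 'n ^ 'n \<Rightarrow> real ^ 'n ^ 'n \<Rightarrow> real set \<Rightarrow> real" where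
  "tau m mb A Ab X =
     det (mat 1 + A ** setprod_mat (Hmat m) X ** Ab ** setprod_mat (Hbarmat mb) X)"

definition Gam :: "real \<Rightarrow> real \<Rightarrow> real \<Rightarrow> real" where
  "Gam x y z = ((x + y) * (x + z)) / ((x - y) * (x - z))"

definition admissible :: "real ^ 'n \<Rightarrow> real ^ 'n \<Rightarrow> real \<Rightarrow> bool" where
  "admissible m mb z \<longleftrightarrow> (\<forall>j. z \<noteq> m $ j \<and> z \<noteq> - m $ j \<and> z \<noteq> mb $ j \<and> z \<noteq> - mb $ j)"

end

theory Submission
  imports Defs "HOL-Computational_Algebra.Polynomial"
begin


lemma minv: fixes A :: "real^'n^'n" assumes "invertible A"
  shows "A ** matrix_inv A = mat 1" "matrix_inv A ** A = mat 1"
proof -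
  have "\<exists>A'. A ** A' = mat 1 \<and> A' ** A = mat 1" using assms invertible_def by blast
  then have "A ** matrix_inv A = mat 1 \<and> matrix_inv A ** A = mat 1"
    unfolding matrix_inv_def by (rule someI_ex)
  then show "A ** matrix_inv A = mat 1" "matrix_inv A ** A = mat 1" by auto
qed

lemma minv_unique: fixes A B :: "real^'n^'n" assumes "A ** B = mat 1" "B ** A = mat 1"
  shows "matrix_inv A = B"
proof -
  have inv: "invertible A" using assms invertible_def by blast
  have "matrix_inv A = matrix_inv A ** (A ** B)" using assms by simp
  also have "\<dots> = (matrix_inv A ** A) ** B" by (simp add: matrix_mul_assoc)
  also have "\<dots> = B" using minv[OF inv] by simp
  finally show ?thesis .
qed

lemma diagm_nth[simp]: "diagm u $ i $ j = (if i = j then u $ i else 0)"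
  by (simp add: diagm_def)

lemma diagm_mult_left: "(diagm u ** A) $ i $ j = u $ i * A $ i $ j"
  by (simp add: matrix_matrix_mult_def diagm_def if_distrib[of "\<lambda>x. x * _"] cong: if_cong)

lemma diagm_mult_right: "(A ** diagm u) $ i $ j = A $ i $ j * u $ j"
  by (simp add: matrix_matrix_mult_def diagm_def if_distrib[of "\<lambda>x. _ * x"] cong: if_cong)

lemma diagm_mult: "diagm u ** diagm v = diagm (\<chi> i. u $ i * v $ i)"
  by (simp add: vec_eq_iff diagm_mult_left)

lemma mat1_diagm: "(mat 1 :: real^'n^'n) = diagm (\<chi> i. 1)"
  by (simp add: vec_eq_iff mat_def)

lemma diagm_minus_scal: "diagm m - z *\<^sub>R mat 1 = diagm (\<chi> i. m $ i - z)"
  by (simp add: vec_eq_iff mat_def)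

lemma diagm_plus_scal: "diagm m + z *\<^sub>R mat 1 = diagm (\<chi> i. m $ i + z)"
  by (simp add: vec_eq_iff mat_def)

lemma minv_diagm: assumes "\<And>i. u $ i \<noteq> 0"
  shows "matrix_inv (diagm u) = diagm (\<chi> i. 1 / u $ i)"
  by (rule minv_unique) (simp_all add: diagm_mult assms mat1_diagm)

lemma Hmat_diag: assumes "admissible m mb z"
  shows "Hmat m z = diagm (\<chi> i. (m $ i - z) / (m $ i + z))"
proof -
  have nz: "\<And>i. (\<chi> i. m $ i + z) $ i \<noteq> 0" using assms unfolding admissible_def
    by (metis add.commute add_eq_0_iff vec_lambda_beta)
  show ?thesis unfolding Hmat_def diagm_minus_scal diagm_plus_scal minv_diagm[OF nz] diagm_mult
    by (simp add: divide_inverse)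
qed

lemma Hbarmat_diag: assumes "admissible m mb z"
  shows "Hbarmat mb z = diagm (\<chi> i. (mb $ i + z) / (mb $ i - z))"
proof -
  have nz: "\<And>i. (\<chi> i. mb $ i - z) $ i \<noteq> 0" using assms unfolding admissible_def
    by auto
  show ?thesis unfolding Hbarmat_def diagm_minus_scal diagm_plus_scal minv_diagm[OF nz] diagm_mult
    by (simp add: divide_inverse)
qed

lemma foldr_diag:
  assumes "\<And>x. x \<in> set xs \<Longrightarrow> F x = diagm (\<chi> i. f x i)"
  shows "foldr (\<lambda>\<xi> P. F \<xi> ** P) xs (mat 1) = diagm (\<chi> i. prod_list (map (\<lambda>x. f x i) xs))"
  using assms
proof (induction xs)
  case Nil then show ?case by (simp add: mat1_diagm)
next
  case (Cons y ys)
  then show ?case by (simp add: diagm_mult)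
qed

lemma setprod_diag:
  assumes "finite X" "\<And>x. x \<in> X \<Longrightarrow> F x = diagm (\<chi> i. f x i)"
  shows "setprod_mat F X = diagm (\<chi> i. \<Prod>x\<in>X. f x i)"
proof -
  have "setprod_mat F X = diagm (\<chi> i. prod_list (map (\<lambda>x. f x i) (sorted_list_of_set X)))"
    unfolding setprod_mat_def by (rule foldr_diag) (use assms in auto)
  also have "\<dots> = diagm (\<chi> i. \<Prod>x\<in>X. f x i)"
    by (simp add: prod.distinct_set_conv_list[symmetric] assms(1))
  finally show ?thesis .
qed


lemma outer_nth[simp]: "outer u v $ i $ j = u $ i * v $ j"
  by (simp add: outer_def)

lemma mult_outer_left: "X ** outer u v = outer (X *v u) v"
  by (simp add: vec_eq_iff matrix_matrix_mult_def matrix_vector_mult_def sum_distrib_right mult.assoc)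

lemma outer_mult_right: "outer u v ** X = outer u (v v* X)"
  by (simp add: vec_eq_iff matrix_matrix_mult_def vector_matrix_mult_def sum_distrib_left mult.assoc)

lemma outer_mv: "outer u v *v w = (v \<bullet> w) *\<^sub>R u"
  by (simp add: vec_eq_iff matrix_vector_mult_def inner_vec_def sum_distrib_left mult_ac)

lemma row_mat1_sum: "(\<Sum>i\<in>UNIV. z $ i *s row i (mat 1 :: real^'n^'n)) = z"
proof -
  have "(\<Sum>i\<in>UNIV. z $ i *s row i (mat 1 :: real^'n^'n)) = z v* mat 1"
    by (simp add: vec_eq_iff vector_matrix_mult_def row_def sum_component mat_def)
  then show ?thesis by simp
qed

lemma row_eq: "row i A = A $ i"
  by (simp add: row_def vec_eq_iff)

lemma detA: "det ((\<chi> i. if i = k then z else row i (mat 1 :: real^'n^'n)) :: real^'n^'n) = z $ k"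
  using cramer_lemma_transpose[of k z "mat 1 :: real^'n^'n"] unfolding row_mat1_sum by simp

lemma detB:
  fixes u z :: "real^'n"
  assumes "finite S" "k \<notin> S"
  shows "det ((\<chi> i. if i = k then z else if i \<in> S then row i (mat 1) + u$i *s z else row i (mat 1)) :: real^'n^'n) = z $ k"
  using assms
proof (induction S rule: finite_induct)
  case empty
  have "((\<chi> i. if i = k then z else if i \<in> {} then row i (mat 1) + u$i *s z else row i (mat 1)) :: real^'n^'n)
     = (\<chi> i. if i = k then z else row i (mat 1))" (is "_ = ?B") by (simp only: empty_iff if_False)
  then have "det (\<chi> i. if i = k then z else if i \<in> {} then row i (mat 1) + u$i *s z else row i (mat 1)) = det ?B" by (rule arg_cong)
  also have "det ?B = z $ k" by (rule detA)
  finally show ?case .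
next
  case (insert j S)
  let ?A = "(\<chi> i. if i = k then z else if i \<in> S then row i (mat 1) + u$i *s z else row i (mat 1)) :: real^'n^'n"
  have jk: "j \<noteq> k" using insert by auto
  have kS: "k \<notin> S" using insert.prems by simp
  have eq: "(\<chi> i. if i = k then z else if i \<in> insert j S then row i (mat 1) + u$i *s z else row i (mat 1)) =
        (\<chi> l. if l = j then row j ?A + u$j *s row k ?A else row l ?A)"
    unfolding row_eq using jk insert.hyps by (auto simp: vec_eq_iff)
  have d1: "det (\<chi> l. if l = j then row j ?A + u$j *s row k ?A else row l ?A) = det ?A"
    by (rule det_row_operation[OF jk, where A = "?A" and c = "u$j"])
  show ?case unfolding eq d1 by (rule insert.IH[OF kS])
qed

lemma detC:
  fixes u z :: "real^'n"
  assumes "finite S"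
  shows "det ((\<chi> i. if i \<in> S then row i (mat 1) + u$i *s z else row i (mat 1)) :: real^'n^'n) = 1 + (\<Sum>i\<in>S. u$i * z$i)"
  using assms
proof (induction S rule: finite_induct)
  case empty
  have "((\<chi> i. row i (mat 1)) :: real^'n^'n) = mat 1" by (simp add: vec_eq_iff row_def)
  then show ?case by simp
next
  case (insert k S)
  let ?c = "\<lambda>i. if i \<in> S then row i (mat 1) + u$i *s z else row i (mat 1 :: real^'n^'n)"
  have eq1: "((\<chi> i. if i \<in> insert k S then row i (mat 1) + u$i *s z else row i (mat 1)) :: real^'n^'n) =
        (\<chi> i. if i = k then row i (mat 1) + u$i *s z else ?c i)" by (auto simp: vec_eq_iff)
  have s1: "det ((\<chi> i. if i = k then row i (mat 1) + u$i *s z else ?c i) :: real^'n^'n) =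
     det ((\<chi> i. if i = k then row i (mat 1) else ?c i) :: real^'n^'n) + det ((\<chi> i. if i = k then u$i *s z else ?c i) :: real^'n^'n)"
    by (rule det_row_add[of k "\<lambda>i. row i (mat 1)" "\<lambda>i. u$i *s z" ?c])
  have eq2: "((\<chi> i. if i = k then row i (mat 1) else ?c i) :: real^'n^'n) = (\<chi> i. ?c i)"
    using insert by (auto simp: vec_eq_iff)
  have eq3: "((\<chi> i. if i = k then u$i *s z else ?c i) :: real^'n^'n) = (\<chi> i. if i = k then u$k *s z else ?c i)"
    by (auto simp: vec_eq_iff)
  have s2: "det ((\<chi> i. if i = k then u$k *s z else ?c i) :: real^'n^'n) = u$k * det ((\<chi> i. if i = k then z else ?c i) :: real^'n^'n)"
    by (rule det_row_mul[of k "u$k" "\<lambda>i. z" ?c])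
  have s3: "det ((\<chi> i. if i = k then z else ?c i) :: real^'n^'n) = z $ k"
    by (rule detB[OF insert(1) insert(2)])
  have s4: "det ((\<chi> i. ?c i) :: real^'n^'n) = 1 + (\<Sum>i\<in>S. u$i * z$i)" by (rule insert.IH)
  have s5: "(\<Sum>i\<in>insert k S. u$i * z$i) = u$k * z$k + (\<Sum>i\<in>S. u$i * z$i)"
    using insert.hyps by simp
  show ?case unfolding eq1 s1 eq2 eq3 s2 s3 s4 s5 by simp
qed

lemma det_I_outer: "det (mat 1 + outer u z :: real^'n^'n) = 1 + z \<bullet> u"
proof -
  have "(mat 1 + outer u z :: real^'n^'n) = (\<chi> i. if i \<in> UNIV then row i (mat 1) + u$i *s z else row i (mat 1))"
    by (simp add: vec_eq_iff row_def mat_def)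
  then show ?thesis using detC[of UNIV u z] by (simp add: inner_vec_def mult.commute)
qed


definition cd :: "real\<Rightarrow>real\<Rightarrow>real\<Rightarrow>real" where
  "cd x y z = -2*x*(x+y)^2*(x+z)^2/((x-y)^2*(x-z)^2)"
definition co :: "real\<Rightarrow>real\<Rightarrow>real\<Rightarrow>real" where
  "co x y z = 4*x*y*(x+y)*(x+z)*(y+z)/((x-y)^2*(x-z)*(y-z))"
definition T3 :: "real\<Rightarrow>real\<Rightarrow>real\<Rightarrow>real\<Rightarrow>real\<Rightarrow>real\<Rightarrow>real\<Rightarrow>real\<Rightarrow>real\<Rightarrow>real\<Rightarrow>real\<Rightarrow>real\<Rightarrow>real" where
 "T3 a b c paa pab pac pba pbb pbc pca pcb pcc =
   (((a+b)*(a+c)*(b+c))^2*paa*pbb*pcc - 4*a*b*((a+c)*(b+c))^2*pab*pba*pcc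
    - 4*a*c*((a+b)*(b+c))^2*pac*pca*pbb - 4*b*c*((a+b)*(a+c))^2*pbc*pcb*paa
    + 8*a*b*c*(a+b)*(a+c)*(b+c)*(pab*pbc*pca + pac*pcb*pba)) / ((a-b)*(a-c)*(b-c))^2"
definition det3p :: "real\<Rightarrow>real\<Rightarrow>real\<Rightarrow>real\<Rightarrow>real\<Rightarrow>real\<Rightarrow>real\<Rightarrow>real\<Rightarrow>real\<Rightarrow>real" where
 "det3p m11 m12 m13 m21 m22 m23 m31 m32 m33 = (1+m11)*(1+m22)*(1+m33) + m12*m23*m31 + m13*m21*m32
    - (1+m11)*m23*m32 - (1+m22)*m13*m31 - (1+m33)*m12*m21"

lemma mm_diff_l: "(A::real^'n^'m) ** (B - C) = A ** B - A ** C"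
  by (simp add: vec_eq_iff matrix_matrix_mult_def sum_subtractf right_diff_distrib)

lemma CK_diag: fixes a b c :: real
  assumes "a\<noteq>b" "a\<noteq>c" "b\<noteq>c" "a\<noteq>0" "a+b\<noteq>0" "a+c\<noteq>0"
  shows "cd a b c/(a+a) + co a b c/(b+a) + co a c b/(c+a) = -1"
proof -
  have d: "a-b\<noteq>0" "a-c\<noteq>0" "b-c\<noteq>0" "c-b\<noteq>0" "c\<noteq>b" "b\<noteq>a" "c\<noteq>a" "b+a\<noteq>0" "c+a\<noteq>0" "a+a\<noteq>0" using assms by auto
  show ?thesis unfolding cd_def co_def by (simp add: divide_simps d assms) algebra
qed
lemma CK_off: fixes a b c :: real
  assumes "a\<noteq>b" "a\<noteq>c" "b\<noteq>c" "b\<noteq>0" "a+b\<noteq>0" "b+c\<noteq>0"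
  shows "cd a b c/(a+b) + co a b c/(b+b) + co a c b/(c+b) = 0"
proof -
  have d: "a-b\<noteq>0" "a-c\<noteq>0" "b-c\<noteq>0" "c-b\<noteq>0" "c\<noteq>b" "b\<noteq>a" "c\<noteq>a" "b+a\<noteq>0" "c+b\<noteq>0" "b+b\<noteq>0" using assms by auto
  show ?thesis unfolding cd_def co_def by (simp add: divide_simps d assms) algebra
qed

lemma co_sym1: "co a c b = co c a b" unfolding co_def by (simp add: algebra_simps power2_eq_square)
lemma detCm: fixes a b c :: real
  assumes "a\<noteq>b" "a\<noteq>c" "b\<noteq>c"
  shows "cd a b c * cd b a c * cd c a b + co a b c * co b c a * co a c b + co a c b * co a b c * co b c a
    - cd a b c * co b c a * co b c a - cd b a c * co a c b * co a c b - cd c a b * co a b c * co a b c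
    = -8*a*b*c*((a+b)*(a+c)*(b+c))^2/((a-b)*(a-c)*(b-c))^2"
proof -
  have d: "a-b\<noteq>0" "a-c\<noteq>0" "b-c\<noteq>0" "c-b\<noteq>0" "c\<noteq>b" "b\<noteq>a" "c\<noteq>a" "b-a\<noteq>0" "c-a\<noteq>0" using assms by auto
  show ?thesis unfolding cd_def co_def by (simp add: divide_simps d assms) algebra
qed
lemma S1_3: fixes a b c :: real and W :: "real \<Rightarrow> real \<Rightarrow> real"
  assumes "a\<noteq>b" "a\<noteq>c" "b\<noteq>c" "a\<noteq>0" "b\<noteq>0" "c\<noteq>0" "a+b\<noteq>0" "a+c\<noteq>0" "b+c\<noteq>0"
  defines "P \<equiv> \<lambda>x y. 1 - (x+y) * W x y"
  shows "det3p (cd a b c * W a a + co a b c * W b a + co a c b * W c a)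
               (cd a b c * W a b + co a b c * W b b + co a c b * W c b)
               (cd a b c * W a c + co a b c * W b c + co a c b * W c c)
               (co a b c * W a a + cd b a c * W b a + co b c a * W c a)
               (co a b c * W a b + cd b a c * W b b + co b c a * W c b)
               (co a b c * W a c + cd b a c * W b c + co b c a * W c c)
               (co a c b * W a a + co b c a * W b a + cd c a b * W c a)
               (co a c b * W a b + co b c a * W b b + cd c a b * W c b)
               (co a c b * W a c + co b c a * W b c + cd c a b * W c c)
     = T3 a b c (P a a) (P a b) (P a c) (P b a) (P b b) (P b c) (P c a) (P c b) (P c c)"
proof -
  define Cm :: "real^3^3" where "Cm = vector[vector[cd a b c, co a b c, co a c b],
      vector[co a b c, cd b a c, co b c a], vector[co a c b, co b c a, cd c a b]]"
  define Wm :: "real^3^3" where "Wm = vector[vector[W a a, W a b, W a c],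
      vector[W b a, W b b, W b c], vector[W c a, W c b, W c c]]"
  define kaa where "kaa = 1/(2*a)"
  define kbb where "kbb = 1/(2*b)"
  define kcc where "kcc = 1/(2*c)"
  define kab where "kab = 1/(a+b)"
  define kac where "kac = 1/(a+c)"
  define kbc where "kbc = 1/(b+c)"
  define Km :: "real^3^3" where "Km = vector[vector[kaa, kab, kac],
      vector[kab, kbb, kbc], vector[kac, kbc, kcc]]"
  have ne: "b\<noteq>a" "c\<noteq>a" "c\<noteq>b" "b+a\<noteq>0" "c+a\<noteq>0" "c+b\<noteq>0" using assms by auto
  have co1: "co b a c = co a b c" "co c a b = co a c b" "co c b a = co b c a"
    unfolding co_def by (simp_all add: algebra_simps power2_eq_square)
  have CK: "Cm ** Km = - mat 1"
  proof -
    have e: "cd a b c/(a+a) + co a b c/(b+a) + co a c b/(c+a) = -1"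
            "cd b a c/(b+b) + co b a c/(a+b) + co b c a/(c+b) = -1"
            "cd c a b/(c+c) + co c a b/(a+c) + co c b a/(b+c) = -1"
            "cd a b c/(a+b) + co a b c/(b+b) + co a c b/(c+b) = 0"
            "cd a c b/(a+c) + co a c b/(c+c) + co a b c/(b+c) = 0"
            "cd b a c/(b+a) + co b a c/(a+a) + co b c a/(c+a) = 0"
            "cd b c a/(b+c) + co b c a/(c+c) + co b a c/(a+c) = 0"
            "cd c a b/(c+a) + co c a b/(a+a) + co c b a/(b+a) = 0"
            "cd c b a/(c+b) + co c b a/(b+b) + co c a b/(a+b) = 0"
      using CK_diag[of a b c] CK_diag[of b a c] CK_diag[of c a b]
        CK_off[of a b c] CK_off[of a c b] CK_off[of b a c] CK_off[of b c a]
        CK_off[of c a b] CK_off[of c b a] assms ne by auto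
    have cdsym: "cd a c b = cd a b c" "cd b c a = cd b a c" "cd c b a = cd c a b"
      unfolding cd_def by (simp_all add: algebra_simps)
    show ?thesis using e unfolding co1 cdsym
      by (simp add: Cm_def Km_def vec_eq_iff forall_3 matrix_matrix_mult_def sum_3 mat_def
          kaa_def kbb_def kcc_def kab_def kac_def kbc_def add.commute)
  qed
  have fac: "mat 1 + Cm ** Wm = Cm ** (Wm - Km)"
    by (simp add: mm_diff_l CK)
  have "det3p (cd a b c * W a a + co a b c * W b a + co a c b * W c a)
               (cd a b c * W a b + co a b c * W b b + co a c b * W c b)
               (cd a b c * W a c + co a b c * W b c + co a c b * W c c)
               (co a b c * W a a + cd b a c * W b a + co b c a * W c a)
               (co a b c * W a b + cd b a c * W b b + co b c a * W c b)
               (co a b c * W a c + cd b a c * W b c + co b c a * W c c)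
               (co a c b * W a a + co b c a * W b a + cd c a b * W c a)
               (co a c b * W a b + co b c a * W b b + cd c a b * W c b)
               (co a c b * W a c + co b c a * W b c + cd c a b * W c c)
      = det (mat 1 + Cm ** Wm)"
    unfolding det_3 det3p_def
    by (simp add: Cm_def Wm_def matrix_matrix_mult_def sum_3 mat_def)
  also have "\<dots> = det Cm * det (Wm - Km)" by (simp add: fac det_mul)
  also have "det Cm = - (8*a*b*c*((a+b)*(a+c)*(b+c))^2 * (1/((a-b)*(a-c)*(b-c))^2))"
    unfolding det_3 using detCm[OF assms(1-3)] by (simp add: Cm_def algebra_simps)
  also have "det (Wm - Km) = - (P a a*P b b*P c c*kaa*kbb*kcc + P a b*P b c*P c a*kab*kbc*kac
       + P a c*P c b*P b a*kac*kbc*kab - P a a*P b c*P c b*kaa*kbc^2 - P b b*P a c*P c a*kbb*kac^2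
       - P c c*P a b*P b a*kcc*kab^2)"
  proof -
    have eqWK: "Wm - Km = (vector[vector[- P a a*kaa, - P a b*kab, - P a c*kac],
      vector[- P b a*kab, - P b b*kbb, - P b c*kbc], vector[- P c a*kac, - P c b*kbc, - P c c*kcc]])"
      using assms ne by (simp add: Wm_def Km_def P_def vec_eq_iff forall_3 field_simps
          kaa_def kbb_def kcc_def kab_def kac_def kbc_def)
    show ?thesis unfolding eqWK det_3 by simp algebra
  qed
  also have "- (8*a*b*c*((a+b)*(a+c)*(b+c))^2 * (1/((a-b)*(a-c)*(b-c))^2)) * \<dots> =
      T3 a b c (P a a) (P a b) (P a c) (P b a) (P b b) (P b c) (P c a) (P c b) (P c c)"
  proof -
    define iD where "iD = 1/((a-b)*(a-c)*(b-c))^2"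
    have nz: "a\<noteq>0" "b\<noteq>0" "c\<noteq>0" "a+b\<noteq>0" "a+c\<noteq>0" "b+c\<noteq>0" using assms by auto
    define \<kappa> where "\<kappa> = 8*a*b*c*((a+b)*(a+c)*(b+c))^2 * iD"
    have f1: "\<kappa>*kaa*kbb*kcc = ((a+b)*(a+c)*(b+c))^2*iD"
      unfolding \<kappa>_def kaa_def kbb_def kcc_def by (simp add: divide_simps nz; (algebra)?)
    have f2: "\<kappa>*kab*kbc*kac = 8*a*b*c*(a+b)*(a+c)*(b+c)*iD"
      unfolding \<kappa>_def kab_def kbc_def kac_def by (simp add: divide_simps nz; (algebra)?)
    have f3: "\<kappa>*kaa*kbc^2 = 4*b*c*((a+b)*(a+c))^2*iD"
      unfolding \<kappa>_def kaa_def kbc_def by (simp add: divide_simps nz; (algebra)?)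
    have f4: "\<kappa>*kbb*kac^2 = 4*a*c*((a+b)*(b+c))^2*iD"
      unfolding \<kappa>_def kbb_def kac_def by (simp add: divide_simps nz; (algebra)?)
    have f5: "\<kappa>*kcc*kab^2 = 4*a*b*((a+c)*(b+c))^2*iD"
      unfolding \<kappa>_def kcc_def kab_def by (simp add: divide_simps nz; (algebra)?)
    have t3: "T3 a b c (P a a) (P a b) (P a c) (P b a) (P b b) (P b c) (P c a) (P c b) (P c c) =
      (((a+b)*(a+c)*(b+c))^2*P a a*P b b*P c c - 4*a*b*((a+c)*(b+c))^2*P a b*P b a*P c c
    - 4*a*c*((a+b)*(b+c))^2*P a c*P c a*P b b - 4*b*c*((a+b)*(a+c))^2*P b c*P c b*P a a
    + 8*a*b*c*(a+b)*(a+c)*(b+c)*(P a b*P b c*P c a + P a c*P c b*P b a)) * iD"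
      unfolding T3_def iD_def by simp
    show ?thesis unfolding t3 iD_def[symmetric] \<kappa>_def[symmetric]
      using f1 f2 f3 f4 f5 by algebra
  qed
  finally show ?thesis .
qed


lemma alg2: fixes d w11 w12 w21 w22 :: real assumes s: "1 + w11 \<noteq> 0"
  shows "d * (1 + w11) * (1 + (w22 - w12 / (1 + w11) * w21)) = d * ((1 + w11) * (1 + w22) - w12 * w21)"
  by (simp add: divide_simps s; (algebra)?)

lemma alg3: fixes d w11 w12 w13 w21 w22 w23 w31 w32 w33 :: real assumes s: "1 + w11 \<noteq> 0"
  shows "d * (1 + w11) *
     ((1 + (w22 - w12 / (1 + w11) * w21)) * (1 + (w33 - w13 / (1 + w11) * w31))
      - (w23 - w13 / (1 + w11) * w21) * (w32 - w12 / (1+w11) * w31)) =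
     d * det3p w11 w12 w13 w21 w22 w23 w31 w32 w33"
  unfolding det3p_def by (simp add: divide_simps s; (algebra)?)

lemma R1: fixes G :: "real^'n^'n" assumes "invertible G"
  shows "det (G + outer x z) = det G * (1 + z \<bullet> (matrix_inv G *v x))"
proof -
  have "G + outer x z = G ** (mat 1 + outer (matrix_inv G *v x) z)"
    by (simp add: matrix_add_ldistrib mult_outer_left matrix_vector_mul_assoc minv[OF assms])
  then show ?thesis by (simp add: det_mul det_I_outer)
qed

lemma SM: fixes G :: "real^'n^'n" assumes inv: "invertible G"
  and s: "1 + z \<bullet> (matrix_inv G *v x) \<noteq> 0"
  shows "matrix_inv (G + outer x z) *v v = matrix_inv G *v v
     - ((z \<bullet> (matrix_inv G *v v)) / (1 + z \<bullet> (matrix_inv G *v x))) *\<^sub>R (matrix_inv G *v x)"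
    and "invertible (G + outer x z)"
proof -
  let ?Gi = "matrix_inv G"
  let ?s = "1 + z \<bullet> (?Gi *v x)"
  let ?al = "(z \<bullet> (?Gi *v v)) / ?s"
  let ?r = "?Gi *v v - ?al *\<^sub>R (?Gi *v x)"
  have dG: "det G \<noteq> 0" using inv invertible_det_nz by blast
  have "det (G + outer x z) \<noteq> 0" using R1[OF inv, of x z] dG s by simp
  then show inv2: "invertible (G + outer x z)" by (simp add: invertible_det_nz)
  have GGi: "G *v (?Gi *v w) = w" for w
    by (simp add: matrix_vector_mul_assoc minv[OF inv])
  have zr: "z \<bullet> ?r = ?al"
  proof -
    have "z \<bullet> ?r = z \<bullet> (?Gi *v v) - ?al * (z \<bullet> (?Gi *v x))"
      by (simp add: inner_diff_right)
    also have "\<dots> = ?al" by (simp add: divide_simps s algebra_simps)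
    finally show ?thesis .
  qed
  have h1: "(G + outer x z) *v ?r = G *v ?r + (z \<bullet> ?r) *\<^sub>R x"
    by (simp add: matrix_vector_mult_add_rdistrib outer_mv)
  have h2: "G *v ?r = v - ?al *\<^sub>R x"
    by (simp add: matrix_vector_mult_diff_distrib matrix_vector_mult_scaleR GGi)
  have "(G + outer x z) *v ?r = v" unfolding h1 h2 zr by simp
  then have "matrix_inv (G + outer x z) *v ((G + outer x z) *v ?r) = matrix_inv (G + outer x z) *v v"
    by simp
  then show "matrix_inv (G + outer x z) *v v = ?r"
    by (simp add: matrix_vector_mul_assoc minv[OF inv2])
qed

lemma R2: fixes G :: "real^'n^'n" assumes inv: "invertible G"
  and d1: "det (G + outer x1 z1) \<noteq> 0"
  shows "det (G + outer x1 z1 + outer x2 z2) = det G *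
     ((1 + z1 \<bullet> (matrix_inv G *v x1)) * (1 + z2 \<bullet> (matrix_inv G *v x2))
       - (z1 \<bullet> (matrix_inv G *v x2)) * (z2 \<bullet> (matrix_inv G *v x1)))"
proof -
  let ?Gi = "matrix_inv G"
  let ?s = "1 + z1 \<bullet> (?Gi *v x1)"
  have s: "?s \<noteq> 0" using R1[OF inv, of x1 z1] d1 by auto
  have inv1: "invertible (G + outer x1 z1)" using SM(2)[OF inv s] .
  have r1: "det (G + outer x1 z1 + outer x2 z2) = det (G + outer x1 z1) * (1 + z2 \<bullet> (matrix_inv (G + outer x1 z1) *v x2))"
    by (rule R1[OF inv1])
  have v2: "matrix_inv (G + outer x1 z1) *v x2 = ?Gi *v x2 - ((z1 \<bullet> (?Gi *v x2)) / ?s) *\<^sub>R (?Gi *v x1)"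
    by (rule SM(1)[OF inv s])
  have dG1: "det (G + outer x1 z1) = det G * ?s" by (rule R1[OF inv])
  have e: "det (G + outer x1 z1 + outer x2 z2) = det G * ?s *
     (1 + z2 \<bullet> (?Gi *v x2 - ((z1 \<bullet> (?Gi *v x2)) / ?s) *\<^sub>R (?Gi *v x1)))"
    using r1 by (simp only: v2 dG1)
  have e': "det (G + outer x1 z1 + outer x2 z2) = det G * ?s *
     (1 + (z2 \<bullet> (?Gi *v x2) - (z1 \<bullet> (?Gi *v x2)) / ?s * (z2 \<bullet> (?Gi *v x1))))"
    using e by (simp only: inner_diff_right inner_scaleR_right)
  show ?thesis unfolding e' by (rule alg2[OF s])
qed

lemma R3: fixes G :: "real^'n^'n" assumes inv: "invertible G"
  and d1: "det (G + outer x1 z1) \<noteq> 0"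
  and d2: "det (G + outer x1 z1 + outer x2 z2) \<noteq> 0"
  shows "det (G + outer x1 z1 + outer x2 z2 + outer x3 z3) = det G *
     det3p (z1 \<bullet> (matrix_inv G *v x1)) (z1 \<bullet> (matrix_inv G *v x2)) (z1 \<bullet> (matrix_inv G *v x3))
           (z2 \<bullet> (matrix_inv G *v x1)) (z2 \<bullet> (matrix_inv G *v x2)) (z2 \<bullet> (matrix_inv G *v x3))
           (z3 \<bullet> (matrix_inv G *v x1)) (z3 \<bullet> (matrix_inv G *v x2)) (z3 \<bullet> (matrix_inv G *v x3))"
proof -
  let ?Gi = "matrix_inv G"
  let ?G1 = "G + outer x1 z1"
  let ?s = "1 + z1 \<bullet> (?Gi *v x1)"
  have s: "?s \<noteq> 0" using R1[OF inv, of x1 z1] d1 by auto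
  have inv1: "invertible ?G1" using SM(2)[OF inv s] .
  have d2': "det (?G1 + outer x2 z2) \<noteq> 0" using d2 by simp
  have r2: "det (?G1 + outer x2 z2 + outer x3 z3) = det ?G1 *
     ((1 + z2 \<bullet> (matrix_inv ?G1 *v x2)) * (1 + z3 \<bullet> (matrix_inv ?G1 *v x3))
       - (z2 \<bullet> (matrix_inv ?G1 *v x3)) * (z3 \<bullet> (matrix_inv ?G1 *v x2)))"
    by (rule R2[OF inv1 d2'])
  have v2: "matrix_inv ?G1 *v x2 = ?Gi *v x2 - ((z1 \<bullet> (?Gi *v x2)) / ?s) *\<^sub>R (?Gi *v x1)"
    by (rule SM(1)[OF inv s])
  have v3: "matrix_inv ?G1 *v x3 = ?Gi *v x3 - ((z1 \<bullet> (?Gi *v x3)) / ?s) *\<^sub>R (?Gi *v x1)"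
    by (rule SM(1)[OF inv s])
  have dG1: "det ?G1 = det G * ?s" by (rule R1[OF inv])
  have e: "det (?G1 + outer x2 z2 + outer x3 z3) = det G * ?s *
     ((1 + z2 \<bullet> (?Gi *v x2 - ((z1 \<bullet> (?Gi *v x2)) / ?s) *\<^sub>R (?Gi *v x1))) *
      (1 + z3 \<bullet> (?Gi *v x3 - ((z1 \<bullet> (?Gi *v x3)) / ?s) *\<^sub>R (?Gi *v x1)))
      - (z2 \<bullet> (?Gi *v x3 - ((z1 \<bullet> (?Gi *v x3)) / ?s) *\<^sub>R (?Gi *v x1))) *
        (z3 \<bullet> (?Gi *v x2 - ((z1 \<bullet> (?Gi *v x2)) / ?s) *\<^sub>R (?Gi *v x1))))"
    using r2 by (simp only: v2 v3 dG1)
  have e': "det (?G1 + outer x2 z2 + outer x3 z3) = det G * ?s *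
     ((1 + (z2 \<bullet> (?Gi *v x2) - (z1 \<bullet> (?Gi *v x2)) / ?s * (z2 \<bullet> (?Gi *v x1)))) *
      (1 + (z3 \<bullet> (?Gi *v x3) - (z1 \<bullet> (?Gi *v x3)) / ?s * (z3 \<bullet> (?Gi *v x1))))
      - (z2 \<bullet> (?Gi *v x3) - (z1 \<bullet> (?Gi *v x3)) / ?s * (z2 \<bullet> (?Gi *v x1))) *
        (z3 \<bullet> (?Gi *v x2) - (z1 \<bullet> (?Gi *v x2)) / ?s * (z3 \<bullet> (?Gi *v x1))))"
    using e by (simp only: inner_diff_right inner_scaleR_right)
  show ?thesis unfolding e' by (rule alg3[OF s])
qed


definition xv :: "real^'n \<Rightarrow> real^'n \<Rightarrow> real \<Rightarrow> real^'n" where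
  "xv p mb \<xi> = (\<chi> i. p$i / (mb$i - \<xi>))"
definition yv :: "real^'n \<Rightarrow> real^'n \<Rightarrow> real \<Rightarrow> real^'n" where
  "yv q m \<eta> = (\<chi> j. q$j / (m$j + \<eta>))"

lemma diagm_mv: "diagm m *v w = (\<chi> i. m$i * w$i)"
  by (simp add: vec_eq_iff matrix_vector_mult_def diagm_def if_distrib[of "\<lambda>x. x * _"] cong: if_cong)

lemma diag_inner_sym: "y \<bullet> (diagm m *v w) = (diagm m *v y) \<bullet> w"
  by (simp add: diagm_mv inner_vec_def mult_ac)

lemma Wrel:
  fixes m mb p q pb qb :: "real^'n" and A Ab :: "real^'n^'n"
  assumes S1: "diagm mb ** A - A ** diagm m = outer p q"
    and S2: "diagm m ** Ab - Ab ** diagm mb = outer pb qb"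
    and inv: "invertible (mat 1 + A ** Ab)"
    and hx: "\<And>i. mb$i \<noteq> \<xi>" and hy: "\<And>j. m$j + \<eta> \<noteq> 0"
  defines "Gi \<equiv> matrix_inv (mat 1 + A ** Ab)"
  shows "1 - (\<xi>+\<eta>) * (yv q m \<eta> \<bullet> (Ab *v (Gi *v xv p mb \<xi>))) =
     (1 + yv q m \<eta> \<bullet> (Ab *v (Gi *v p))) * (1 - q \<bullet> (Ab *v (Gi *v xv p mb \<xi>)))
     + (yv q m \<eta> \<bullet> (pb - Ab *v (Gi *v (A *v pb)))) * (qb \<bullet> (Gi *v xv p mb \<xi>))"
proof -
  let ?G = "mat 1 + A ** Ab"
  let ?M = "diagm m" and ?Mb = "diagm mb"
  let ?x = "xv p mb \<xi>" and ?y = "yv q m \<eta>"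
  define r where "r = Gi *v ?x"
  have GGi: "?G *v (Gi *v w) = w" for w
    by (simp add: Gi_def matrix_vector_mul_assoc minv[OF inv])
  have GiG: "Gi *v (?G *v w) = w" for w
    by (simp add: Gi_def matrix_vector_mul_assoc minv[OF inv])
  have V1: "?Mb *v (A *v w) = A *v (?M *v w) + (q \<bullet> w) *\<^sub>R p" for w
  proof -
    have "(?Mb ** A - A ** ?M) *v w = (q \<bullet> w) *\<^sub>R p" using S1 by (simp add: outer_mv)
    then show ?thesis by (simp add: matrix_vector_mult_diff_rdistrib matrix_vector_mul_assoc algebra_simps)
  qed
  have V2: "?M *v (Ab *v w) = Ab *v (?Mb *v w) + (qb \<bullet> w) *\<^sub>R pb" for w
  proof -
    have "(?M ** Ab - Ab ** ?Mb) *v w = (qb \<bullet> w) *\<^sub>R pb" using S2 by (simp add: outer_mv)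
    then show ?thesis by (simp add: matrix_vector_mult_diff_rdistrib matrix_vector_mul_assoc algebra_simps)
  qed
  have Gv: "?G *v w = w + A *v (Ab *v w)" for w
    by (simp add: matrix_vector_mult_add_rdistrib matrix_vector_mul_assoc)
  have Mbx: "?Mb *v ?x = p + \<xi> *\<^sub>R ?x"
    using hx by (simp add: diagm_mv xv_def vec_eq_iff field_simps)
  have My: "?M *v ?y = q - \<eta> *\<^sub>R ?y"
    using hy by (simp add: diagm_mv yv_def vec_eq_iff field_simps)
  have Gr: "r + A *v (Ab *v r) = ?x" using GGi[of ?x] unfolding r_def Gv .
  define t where "t = ?Mb *v r"
  have Gt: "?G *v t = ?Mb *v ?x - (q \<bullet> (Ab *v r)) *\<^sub>R p - (qb \<bullet> r) *\<^sub>R (A *v pb)"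
  proof -
    have "?G *v t = t + A *v (Ab *v t)" by (rule Gv)
    also have "Ab *v t = ?M *v (Ab *v r) - (qb \<bullet> r) *\<^sub>R pb" using V2[of r] unfolding t_def by simp
    also have "A *v (?M *v (Ab *v r) - (qb \<bullet> r) *\<^sub>R pb) =
        ?Mb *v (A *v (Ab *v r)) - (q \<bullet> (Ab *v r)) *\<^sub>R p - (qb \<bullet> r) *\<^sub>R (A *v pb)"
      using V1[of "Ab *v r"] by (simp add: matrix_vector_mult_diff_distrib matrix_vector_mult_scaleR)
    finally have "?G *v t = ?Mb *v (r + A *v (Ab *v r)) - (q \<bullet> (Ab *v r)) *\<^sub>R p - (qb \<bullet> r) *\<^sub>R (A *v pb)"
      unfolding t_def by (simp add: matrix_vector_right_distrib)
    then show ?thesis unfolding Gr .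
  qed
  have Gt2: "t = Gi *v (?Mb *v ?x) - (q \<bullet> (Ab *v r)) *\<^sub>R (Gi *v p) - (qb \<bullet> r) *\<^sub>R (Gi *v (A *v pb))"
  proof -
    have "t = Gi *v (?G *v t)" by (simp add: GiG)
    then show ?thesis unfolding Gt by (simp add: matrix_vector_mult_diff_distrib matrix_vector_mult_scaleR)
  qed
  have GiMbx: "Gi *v (?Mb *v ?x) = Gi *v p + \<xi> *\<^sub>R r"
    unfolding Mbx r_def by (simp add: matrix_vector_right_distrib matrix_vector_mult_scaleR)
  have e1: "?y \<bullet> (Ab *v t) = q \<bullet> (Ab *v r) - \<eta> * (?y \<bullet> (Ab *v r)) - (qb \<bullet> r) * (?y \<bullet> pb)"
  proof -
    have "Ab *v t = ?M *v (Ab *v r) - (qb \<bullet> r) *\<^sub>R pb" using V2[of r] unfolding t_def by simp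
    then have "?y \<bullet> (Ab *v t) = ?y \<bullet> (?M *v (Ab *v r)) - (qb \<bullet> r) * (?y \<bullet> pb)"
      by (simp add: inner_diff_right)
    also have "?y \<bullet> (?M *v (Ab *v r)) = (?M *v ?y) \<bullet> (Ab *v r)" by (rule diag_inner_sym)
    finally show ?thesis unfolding My by (simp add: inner_diff_left)
  qed
  have e2: "?y \<bullet> (Ab *v t) = ?y \<bullet> (Ab *v (Gi *v p)) + \<xi> * (?y \<bullet> (Ab *v r))
      - (q \<bullet> (Ab *v r)) * (?y \<bullet> (Ab *v (Gi *v p))) - (qb \<bullet> r) * (?y \<bullet> (Ab *v (Gi *v (A *v pb))))"
    unfolding Gt2 GiMbx
    by (simp add: matrix_vector_mult_diff_distrib matrix_vector_right_distrib matrix_vector_mult_scaleR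
        inner_diff_right inner_add_right)
  have "?y \<bullet> (pb - Ab *v (Gi *v (A *v pb))) = ?y \<bullet> pb - ?y \<bullet> (Ab *v (Gi *v (A *v pb)))"
    by (simp add: inner_diff_right)
  then show ?thesis using e1 e2 unfolding r_def by (simp add: algebra_simps)
qed


definition cd2 :: "real\<Rightarrow>real\<Rightarrow>real" where "cd2 x y = -2*x*(x+y)^2/(x-y)^2"
definition co2 :: "real\<Rightarrow>real\<Rightarrow>real" where "co2 x y = 4*x*y*(x+y)/(x-y)^2"
definition T2 :: "real\<Rightarrow>real\<Rightarrow>real\<Rightarrow>real\<Rightarrow>real\<Rightarrow>real\<Rightarrow>real" where
 "T2 x y pxx pxy pyx pyy = ((x+y)^2*pxx*pyy - 4*x*y*pxy*pyx)/(x-y)^2"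

lemma S1_2: fixes x y :: real and W :: "real \<Rightarrow> real \<Rightarrow> real"
  assumes "x \<noteq> y"
  defines "P \<equiv> \<lambda>u v. 1 - (u+v) * W u v"
  shows "(1 + (cd2 x y * W x x + co2 x y * W y x)) * (1 + (co2 x y * W x y + cd2 y x * W y y))
     - (cd2 x y * W x y + co2 x y * W y y) * (co2 x y * W x x + cd2 y x * W y x)
   = T2 x y (P x x) (P x y) (P y x) (P y y)"
proof -
  have nz: "x - y \<noteq> 0" "y - x \<noteq> 0" "y \<noteq> x" using assms by auto
  show ?thesis unfolding P_def cd2_def co2_def T2_def by (simp add: divide_simps nz assms(1); (algebra)?)
qed

lemma PFS1: fixes x y a :: real
  assumes "x\<noteq>a" "y+a\<noteq>0"
  shows "(x+a)/(x-a) * ((y-a)/(y+a)) - 1 = (x-y) * ((-2*a)/((x-a)*(y+a)))"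
proof -
  have nz: "x-a\<noteq>0" using assms by auto
  show ?thesis by (simp add: divide_simps nz assms; (algebra)?)
qed

lemma PFS2: fixes x y a b :: real
  assumes "x\<noteq>a" "x\<noteq>b" "y+a\<noteq>0" "y+b\<noteq>0" "a\<noteq>b"
  shows "(x+a)/(x-a)*((x+b)/(x-b)) * ((y-a)/(y+a)*((y-b)/(y+b))) - 1
   = (x-y) * (cd2 a b/((x-a)*(y+a)) + co2 a b/((x-a)*(y+b)) + co2 a b/((x-b)*(y+a)) + cd2 b a/((x-b)*(y+b)))"
proof -
  have nz: "x-a\<noteq>0" "x-b\<noteq>0" "a-b\<noteq>0" "b-a\<noteq>0" "b\<noteq>a" using assms by auto
  show ?thesis unfolding cd2_def co2_def by (simp add: divide_simps nz assms; (algebra)?)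
qed

lemma PFS3: fixes x y a b c :: real
  assumes "x\<noteq>a" "x\<noteq>b" "x\<noteq>c" "y+a\<noteq>0" "y+b\<noteq>0" "y+c\<noteq>0" "a\<noteq>b" "a\<noteq>c" "b\<noteq>c"
  shows "(x+a)/(x-a)*((x+b)/(x-b)*((x+c)/(x-c))) * ((y-a)/(y+a)*((y-b)/(y+b)*((y-c)/(y+c)))) - 1
   = (x-y) * (cd a b c/((x-a)*(y+a)) + co a b c/((x-a)*(y+b)) + co a c b/((x-a)*(y+c))
            + co a b c/((x-b)*(y+a)) + cd b a c/((x-b)*(y+b)) + co b c a/((x-b)*(y+c))
            + co a c b/((x-c)*(y+a)) + co b c a/((x-c)*(y+b)) + cd c a b/((x-c)*(y+c)))"
proof -
  have nz: "x-a\<noteq>0" "x-b\<noteq>0" "x-c\<noteq>0" "a-b\<noteq>0" "a-c\<noteq>0" "b-c\<noteq>0" "c-b\<noteq>0" "b-a\<noteq>0" "c-a\<noteq>0"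
     "c\<noteq>b" "b\<noteq>a" "c\<noteq>a" using assms by auto
  show ?thesis unfolding cd_def co_def by (simp add: divide_simps nz assms; (algebra)?)
qed

lemma S2p:
  fixes a b c :: real and l m r s :: "real \<Rightarrow> real"
  defines "P \<equiv> \<lambda>x y. l x * r y + m x * s y"
  shows "(((a+b)*(a+c)*(b+c))^2*P a a*P b b*P c c - 4*a*b*((a+c)*(b+c))^2*P a b*P b a*P c c
    - 4*a*c*((a+b)*(b+c))^2*P a c*P c a*P b b - 4*b*c*((a+b)*(a+c))^2*P b c*P c b*P a a
    + 8*a*b*c*(a+b)*(a+c)*(b+c)*(P a b*P b c*P c a + P a c*P c b*P b a))
   = (a+b)*(a+c)*(a-b)*(a-c)* P a a * ((b+c)^2*P b b*P c c - 4*b*c*P b c*P c b)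
   + (b+a)*(b+c)*(b-a)*(b-c)* P b b * ((a+c)^2*P a a*P c c - 4*a*c*P a c*P c a)
   + (c+a)*(c+b)*(c-a)*(c-b)* P c c * ((a+b)^2*P a a*P b b - 4*a*b*P a b*P b a)"
  unfolding P_def by algebra

lemma S2:
  fixes a b c :: real and l m r s :: "real \<Rightarrow> real"
  assumes "a\<noteq>b" "a\<noteq>c" "b\<noteq>c"
  defines "P \<equiv> \<lambda>x y. l x * r y + m x * s y"
  shows "T3 a b c (P a a) (P a b) (P a c) (P b a) (P b b) (P b c) (P c a) (P c b) (P c c) =
     Gam a b c * P a a * T2 b c (P b b) (P b c) (P c b) (P c c)
   + Gam b a c * P b b * T2 a c (P a a) (P a c) (P c a) (P c c)
   + Gam c a b * P c c * T2 a b (P a a) (P a b) (P b a) (P b b)"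
proof -
  have nz: "a-b\<noteq>0" "a-c\<noteq>0" "b-c\<noteq>0" "c-b\<noteq>0" "b-a\<noteq>0" "c-a\<noteq>0" "c\<noteq>b" "b\<noteq>a" "c\<noteq>a" using assms by auto
  have p: "(((a+b)*(a+c)*(b+c))^2*P a a*P b b*P c c - 4*a*b*((a+c)*(b+c))^2*P a b*P b a*P c c
    - 4*a*c*((a+b)*(b+c))^2*P a c*P c a*P b b - 4*b*c*((a+b)*(a+c))^2*P b c*P c b*P a a
    + 8*a*b*c*(a+b)*(a+c)*(b+c)*(P a b*P b c*P c a + P a c*P c b*P b a))
   = (a+b)*(a+c)*(a-b)*(a-c)* P a a * ((b+c)^2*P b b*P c c - 4*b*c*P b c*P c b)
   + (b+a)*(b+c)*(b-a)*(b-c)* P b b * ((a+c)^2*P a a*P c c - 4*a*c*P a c*P c a)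
   + (c+a)*(c+b)*(c-a)*(c-b)* P c c * ((a+b)^2*P a a*P b b - 4*a*b*P a b*P b a)"
    unfolding P_def by (rule S2p)
  define N3 where "N3 = (((a+b)*(a+c)*(b+c))^2*P a a*P b b*P c c - 4*a*b*((a+c)*(b+c))^2*P a b*P b a*P c c
    - 4*a*c*((a+b)*(b+c))^2*P a c*P c a*P b b - 4*b*c*((a+b)*(a+c))^2*P b c*P c b*P a a
    + 8*a*b*c*(a+b)*(a+c)*(b+c)*(P a b*P b c*P c a + P a c*P c b*P b a))"
  define Na where "Na = (b+c)^2*P b b*P c c - 4*b*c*P b c*P c b"
  define Nb where "Nb = (a+c)^2*P a a*P c c - 4*a*c*P a c*P c a"
  define Nc where "Nc = (a+b)^2*P a a*P b b - 4*a*b*P a b*P b a"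
  have p': "N3 = (a+b)*(a+c)*(a-b)*(a-c)* P a a * Na + (b+a)*(b+c)*(b-a)*(b-c)* P b b * Nb
     + (c+a)*(c+b)*(c-a)*(c-b)* P c c * Nc" using p unfolding N3_def Na_def Nb_def Nc_def .
  have "T3 a b c (P a a) (P a b) (P a c) (P b a) (P b b) (P b c) (P c a) (P c b) (P c c) = N3 / ((a-b)*(a-c)*(b-c))^2"
    unfolding T3_def N3_def ..
  also have "\<dots> = ((a+b)*(a+c)*(a-b)*(a-c)* P a a * Na + (b+a)*(b+c)*(b-a)*(b-c)* P b b * Nb
     + (c+a)*(c+b)*(c-a)*(c-b)* P c c * Nc) / ((a-b)*(a-c)*(b-c))^2" unfolding p' ..
  also have "\<dots> = Gam a b c * P a a * (Na/(b-c)^2) + Gam b a c * P b b * (Nb/(a-c)^2) + Gam c a b * P c c * (Nc/(a-b)^2)"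
    unfolding Gam_def by (simp add: divide_simps nz assms(1-3); (algebra)?)
  finally show ?thesis unfolding T2_def Na_def Nb_def Nc_def .
qed


lemma mm_add_r: "((X::real^'n^'m) + Y) ** Z = X ** Z + Y ** Z"
  by (simp add: vec_eq_iff matrix_matrix_mult_def sum.distrib distrib_right)

lemma cyc: fixes K :: "real^'n^'n" assumes "\<And>i. d$i \<noteq> 0"
  shows "det (mat 1 + K ** diagm d) = det (mat 1 + diagm d ** K)"
proof -
  let ?Di = "diagm (\<chi> i. 1 / d$i)"
  have DiD: "?Di ** diagm d = mat 1" "diagm d ** ?Di = mat 1"
    using assms by (simp_all add: diagm_mult mat1_diagm)
  have "mat 1 + K ** diagm d = (?Di + K) ** diagm d" by (simp add: mm_add_r DiD)
  moreover have "mat 1 + diagm d ** K = diagm d ** (?Di + K)" by (simp add: matrix_add_ldistrib DiD)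
  ultimately show ?thesis by (simp add: det_mul mult.commute)
qed

lemma tau_explicit:
  assumes "finite X" "\<And>x. x \<in> X \<Longrightarrow> admissible m mb x"
  shows "tau m mb A Ab X = det (mat 1 + (diagm (\<chi> i. \<Prod>x\<in>X. (mb$i + x) / (mb$i - x)) ** A **
            diagm (\<chi> i. \<Prod>x\<in>X. (m$i - x) / (m$i + x))) ** Ab)"
proof -
  have h: "setprod_mat (Hmat m) X = diagm (\<chi> i. \<Prod>x\<in>X. (m$i - x) / (m$i + x))"
    using assms by (intro setprod_diag) (auto intro: Hmat_diag)
  have hb: "setprod_mat (Hbarmat mb) X = diagm (\<chi> i. \<Prod>x\<in>X. (mb$i + x) / (mb$i - x))"
    using assms by (intro setprod_diag) (auto intro: Hbarmat_diag)
  have nz: "(\<chi> i. \<Prod>x\<in>X. (mb$i + x) / (mb$i - x)) $ i \<noteq> 0" for i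
  proof -
    have "(mb$i + x) / (mb$i - x) \<noteq> 0" if "x \<in> X" for x
      using assms(2)[OF that] unfolding admissible_def
      by (metis add.commute add_eq_0_iff divide_eq_0_iff eq_iff_diff_eq_0)
    then show ?thesis using assms(1) by simp
  qed
  show ?thesis unfolding tau_def h hb cyc[OF nz] by (simp add: matrix_mul_assoc)
qed

lemma resc: "(u::real) * A * v = A + A * (u * v - 1)" by (simp add: algebra_simps)
lemma trm: "(p::real) * q * (c / ((x - a) * (y + b))) = p / (x - a) * (c * (q / (y + b)))" by simp

lemma AXe1: fixes x y a A p q :: real
  assumes "x \<noteq> a" "y + a \<noteq> 0" "(x - y) * A = p * q"
  shows "(x+a)/(x-a) * A * ((y-a)/(y+a)) = A + p/(x-a) * ((-2*a) * (q/(y+a)))"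
proof -
  let ?S = "(-2*a)/((x-a)*(y+a))"
  have "(x+a)/(x-a) * A * ((y-a)/(y+a)) = A + A * ((x+a)/(x-a) * ((y-a)/(y+a)) - 1)"
    by (simp add: algebra_simps)
  also have "(x+a)/(x-a) * ((y-a)/(y+a)) - 1 = (x-y) * ?S" by (rule PFS1[OF assms(1,2)])
  also have "A * ((x-y) * ?S) = ((x-y) * A) * ?S" by (simp add: mult_ac)
  also have "\<dots> = p * q * ?S" unfolding assms(3) ..
  also have "p * q * ?S = p/(x-a) * ((-2*a) * (q/(y+a)))" by simp
  finally show ?thesis .
qed

lemma AXe2: fixes x y a b A p q :: real
  assumes "x\<noteq>a" "x\<noteq>b" "y+a\<noteq>0" "y+b\<noteq>0" "a\<noteq>b" "(x - y) * A = p * q"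
  shows "(x+a)/(x-a)*((x+b)/(x-b)) * A * ((y-a)/(y+a)*((y-b)/(y+b))) =
    A + p/(x-a) * (cd2 a b * (q/(y+a)) + co2 a b * (q/(y+b)))
      + p/(x-b) * (co2 a b * (q/(y+a)) + cd2 b a * (q/(y+b)))"
proof -
  let ?S = "cd2 a b/((x-a)*(y+a)) + co2 a b/((x-a)*(y+b)) + co2 a b/((x-b)*(y+a)) + cd2 b a/((x-b)*(y+b))"
  have "(x+a)/(x-a)*((x+b)/(x-b)) * A * ((y-a)/(y+a)*((y-b)/(y+b))) =
      A + A * ((x+a)/(x-a)*((x+b)/(x-b)) * ((y-a)/(y+a)*((y-b)/(y+b))) - 1)"
    by (simp add: algebra_simps)
  also have "(x+a)/(x-a)*((x+b)/(x-b)) * ((y-a)/(y+a)*((y-b)/(y+b))) - 1 = (x-y) * ?S"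
    by (rule PFS2[OF assms(1-5)])
  also have "A * ((x-y) * ?S) = ((x-y) * A) * ?S" by (simp add: mult_ac)
  also have "\<dots> = p * q * ?S" unfolding assms(6) ..
  also have "p * q * ?S = p/(x-a) * (cd2 a b * (q/(y+a)) + co2 a b * (q/(y+b)))
      + p/(x-b) * (co2 a b * (q/(y+a)) + cd2 b a * (q/(y+b)))"
    by (simp add: algebra_simps)
  finally show ?thesis by simp
qed

lemma AXe3: fixes x y a b c A p q :: real
  assumes "x\<noteq>a" "x\<noteq>b" "x\<noteq>c" "y+a\<noteq>0" "y+b\<noteq>0" "y+c\<noteq>0" "a\<noteq>b" "a\<noteq>c" "b\<noteq>c"
    "(x - y) * A = p * q"
  shows "(x+a)/(x-a)*((x+b)/(x-b)*((x+c)/(x-c))) * A * ((y-a)/(y+a)*((y-b)/(y+b)*((y-c)/(y+c)))) =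
    A + p/(x-a) * (cd a b c * (q/(y+a)) + co a b c * (q/(y+b)) + co a c b * (q/(y+c)))
      + p/(x-b) * (co a b c * (q/(y+a)) + cd b a c * (q/(y+b)) + co b c a * (q/(y+c)))
      + p/(x-c) * (co a c b * (q/(y+a)) + co b c a * (q/(y+b)) + cd c a b * (q/(y+c)))"
proof -
  let ?S = "cd a b c/((x-a)*(y+a)) + co a b c/((x-a)*(y+b)) + co a c b/((x-a)*(y+c))
            + co a b c/((x-b)*(y+a)) + cd b a c/((x-b)*(y+b)) + co b c a/((x-b)*(y+c))
            + co a c b/((x-c)*(y+a)) + co b c a/((x-c)*(y+b)) + cd c a b/((x-c)*(y+c))"
  have "(x+a)/(x-a)*((x+b)/(x-b)*((x+c)/(x-c))) * A * ((y-a)/(y+a)*((y-b)/(y+b)*((y-c)/(y+c)))) =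
      A + A * ((x+a)/(x-a)*((x+b)/(x-b)*((x+c)/(x-c))) * ((y-a)/(y+a)*((y-b)/(y+b)*((y-c)/(y+c)))) - 1)"
    by (rule resc)
  also have "(x+a)/(x-a)*((x+b)/(x-b)*((x+c)/(x-c))) * ((y-a)/(y+a)*((y-b)/(y+b)*((y-c)/(y+c)))) - 1 = (x-y) * ?S"
    by (rule PFS3[OF assms(1-9)])
  also have "A * ((x-y) * ?S) = ((x-y) * A) * ?S" by (simp add: mult_ac)
  also have "\<dots> = p * q * ?S" unfolding assms(10) ..
  also have "p * q * ?S = p/(x-a) * (cd a b c * (q/(y+a)) + co a b c * (q/(y+b)) + co a c b * (q/(y+c)))
      + p/(x-b) * (co a b c * (q/(y+a)) + cd b a c * (q/(y+b)) + co b c a * (q/(y+c)))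
      + p/(x-c) * (co a c b * (q/(y+a)) + co b c a * (q/(y+b)) + cd c a b * (q/(y+c)))"
    by (simp only: distrib_left[of "p*q"] distrib_left[of "p/(x-a)"] distrib_left[of "p/(x-b)"] distrib_left[of "p/(x-c)"] trm add.assoc)
  finally show ?thesis by simp
qed


definition z2f :: "real^'n \<Rightarrow> real^'n \<Rightarrow> real \<Rightarrow> real \<Rightarrow> real^'n" where
  "z2f q m x y = cd2 x y *\<^sub>R yv q m x + co2 x y *\<^sub>R yv q m y"
definition z2s :: "real^'n \<Rightarrow> real^'n \<Rightarrow> real \<Rightarrow> real \<Rightarrow> real^'n" where
  "z2s q m x y = co2 x y *\<^sub>R yv q m x + cd2 y x *\<^sub>R yv q m y"
definition z3a :: "real^'n \<Rightarrow> real^'n \<Rightarrow> real \<Rightarrow> real \<Rightarrow> real \<Rightarrow> real^'n" where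
  "z3a q m a b c = cd a b c *\<^sub>R yv q m a + co a b c *\<^sub>R yv q m b + co a c b *\<^sub>R yv q m c"
definition z3b :: "real^'n \<Rightarrow> real^'n \<Rightarrow> real \<Rightarrow> real \<Rightarrow> real \<Rightarrow> real^'n" where
  "z3b q m a b c = co a b c *\<^sub>R yv q m a + cd b a c *\<^sub>R yv q m b + co b c a *\<^sub>R yv q m c"
definition z3c :: "real^'n \<Rightarrow> real^'n \<Rightarrow> real \<Rightarrow> real \<Rightarrow> real \<Rightarrow> real^'n" where
  "z3c q m a b c = co a c b *\<^sub>R yv q m a + co b c a *\<^sub>R yv q m b + cd c a b *\<^sub>R yv q m c"

lemma syl_entry: assumes "diagm mb ** A - A ** diagm m = outer p q"
  shows "(mb$i - m$j) * A$i$j = p$i * q$j"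
proof -
  have "(diagm mb ** A - A ** diagm m) $ i $ j = p$i * q$j" using assms by simp
  then show ?thesis by (simp add: diagm_mult_left diagm_mult_right algebra_simps)
qed

lemma adm_x: "admissible m mb z \<Longrightarrow> mb$i \<noteq> z" unfolding admissible_def by auto
lemma adm_y: "admissible m mb z \<Longrightarrow> m$j + z \<noteq> 0" unfolding admissible_def by (metis add_eq_0_iff)

lemma AX1: assumes S1: "diagm mb ** A - A ** diagm m = outer p q" and "admissible m mb a"
  shows "diagm (\<chi> i. (mb$i + a) / (mb$i - a)) ** A ** diagm (\<chi> i. (m$i - a) / (m$i + a))
     = A + outer (xv p mb a) ((-2*a) *\<^sub>R yv q m a)"
  unfolding vec_eq_iff
proof (intro allI)
  fix i j
  show "(diagm (\<chi> i. (mb$i + a) / (mb$i - a)) ** A ** diagm (\<chi> i. (m$i - a) / (m$i + a))) $ i $ j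
     = (A + outer (xv p mb a) ((-2*a) *\<^sub>R yv q m a)) $ i $ j"
    using AXe1[OF adm_x[OF assms(2)] adm_y[OF assms(2)] syl_entry[OF S1]]
    by (simp add: diagm_mult_left diagm_mult_right xv_def yv_def)
qed

lemma AX2: assumes S1: "diagm mb ** A - A ** diagm m = outer p q" and "admissible m mb a"
   "admissible m mb b" "a \<noteq> b"
  shows "diagm (\<chi> i. (mb$i + a) / (mb$i - a) * ((mb$i + b) / (mb$i - b))) ** A **
         diagm (\<chi> i. (m$i - a) / (m$i + a) * ((m$i - b) / (m$i + b)))
     = A + outer (xv p mb a) (z2f q m a b) + outer (xv p mb b) (z2s q m a b)"
  unfolding vec_eq_iff
proof (intro allI)
  fix i j
  show "(diagm (\<chi> i. (mb$i + a) / (mb$i - a) * ((mb$i + b) / (mb$i - b))) ** A **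
         diagm (\<chi> i. (m$i - a) / (m$i + a) * ((m$i - b) / (m$i + b)))) $ i $ j
     = (A + outer (xv p mb a) (z2f q m a b) + outer (xv p mb b) (z2s q m a b)) $ i $ j"
    using AXe2[OF adm_x[OF assms(2)] adm_x[OF assms(3)] adm_y[OF assms(2)] adm_y[OF assms(3)] assms(4) syl_entry[OF S1]]
    by (simp add: diagm_mult_left diagm_mult_right xv_def yv_def z2f_def z2s_def)
qed

lemma AX3: assumes S1: "diagm mb ** A - A ** diagm m = outer p q" and "admissible m mb a"
   "admissible m mb b" "admissible m mb c" "a \<noteq> b" "a \<noteq> c" "b \<noteq> c"
  shows "diagm (\<chi> i. (mb$i + a) / (mb$i - a) * ((mb$i + b) / (mb$i - b) * ((mb$i + c) / (mb$i - c)))) ** A **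
         diagm (\<chi> i. (m$i - a) / (m$i + a) * ((m$i - b) / (m$i + b) * ((m$i - c) / (m$i + c))))
     = A + outer (xv p mb a) (z3a q m a b c) + outer (xv p mb b) (z3b q m a b c) + outer (xv p mb c) (z3c q m a b c)"
  unfolding vec_eq_iff
proof (intro allI)
  fix i j
  show "(diagm (\<chi> i. (mb$i + a) / (mb$i - a) * ((mb$i + b) / (mb$i - b) * ((mb$i + c) / (mb$i - c)))) ** A **
         diagm (\<chi> i. (m$i - a) / (m$i + a) * ((m$i - b) / (m$i + b) * ((m$i - c) / (m$i + c))))) $ i $ j
     = (A + outer (xv p mb a) (z3a q m a b c) + outer (xv p mb b) (z3b q m a b c) + outer (xv p mb c) (z3c q m a b c)) $ i $ j"
    using AXe3[OF adm_x[OF assms(2)] adm_x[OF assms(3)] adm_x[OF assms(4)]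
        adm_y[OF assms(2)] adm_y[OF assms(3)] adm_y[OF assms(4)] assms(5-7) syl_entry[OF S1]]
    by (simp add: diagm_mult_left diagm_mult_right xv_def yv_def z3a_def z3b_def z3c_def)
qed

lemma upd1: "mat 1 + ((A::real^'n^'n) + outer x z) ** Ab = (mat 1 + A ** Ab) + outer x (z v* Ab)"
  by (simp add: mm_add_r outer_mult_right add.assoc)
lemma upd2: "mat 1 + ((A::real^'n^'n) + outer x1 z1 + outer x2 z2) ** Ab =
   (mat 1 + A ** Ab) + outer x1 (z1 v* Ab) + outer x2 (z2 v* Ab)"
  by (simp add: mm_add_r outer_mult_right add.assoc)
lemma upd3: "mat 1 + ((A::real^'n^'n) + outer x1 z1 + outer x2 z2 + outer x3 z3) ** Ab =
   (mat 1 + A ** Ab) + outer x1 (z1 v* Ab) + outer x2 (z2 v* Ab) + outer x3 (z3 v* Ab)"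
  by (simp add: mm_add_r outer_mult_right add.assoc)

lemma tau_empty: "tau m mb A Ab {} = det (mat 1 + A ** Ab)"
  by (simp add: tau_def setprod_mat_def)


lemma GL:
  fixes m mb p q pb qb :: "real^'n" and A Ab :: "real^'n^'n" and a b c :: real
  assumes Sy1: "diagm mb ** A - A ** diagm m = outer p q"
    and Sy2: "diagm m ** Ab - Ab ** diagm mb = outer pb qb"
    and ha: "admissible m mb a" and hb: "admissible m mb b" and hc: "admissible m mb c"
    and ab: "a \<noteq> b" and ac: "a \<noteq> c" and bc: "b \<noteq> c"
    and a0: "a \<noteq> 0" and b0: "b \<noteq> 0" and c0: "c \<noteq> 0"
    and sab: "a + b \<noteq> 0" and sac: "a + c \<noteq> 0" and sbc: "b + c \<noteq> 0"
    and g0: "det (mat 1 + A ** Ab) \<noteq> 0"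
    and gbc: "det (mat 1 + (A + outer (xv p mb b) (z2f q m b c)) ** Ab) \<noteq> 0"
    and gac: "det (mat 1 + (A + outer (xv p mb a) (z2f q m a c)) ** Ab) \<noteq> 0"
    and gab: "det (mat 1 + (A + outer (xv p mb a) (z2f q m a b)) ** Ab) \<noteq> 0"
    and g3a: "det (mat 1 + (A + outer (xv p mb a) (z3a q m a b c)) ** Ab) \<noteq> 0"
    and g3b: "det (mat 1 + (A + outer (xv p mb a) (z3a q m a b c) + outer (xv p mb b) (z3b q m a b c)) ** Ab) \<noteq> 0"
  shows "tau m mb A Ab {} * tau m mb A Ab {a, b, c} =
           Gam a b c * tau m mb A Ab {a} * tau m mb A Ab {b, c}
         + Gam b a c * tau m mb A Ab {b} * tau m mb A Ab {a, c}
         + Gam c a b * tau m mb A Ab {c} * tau m mb A Ab {a, b}"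
proof -
  define G where "G = mat 1 + A ** Ab"
  define Gi where "Gi = matrix_inv G"
  have inv: "invertible G" using g0 unfolding G_def by (simp add: invertible_det_nz)
  define W where "W = (\<lambda>x y. yv q m x \<bullet> (Ab *v (Gi *v xv p mb y)))"
  define P where "P = (\<lambda>x y. 1 - (x + y) * W x y)"
  define l where "l = (\<lambda>x. 1 + yv q m x \<bullet> (Ab *v (Gi *v p)))"
  define r where "r = (\<lambda>y. 1 - q \<bullet> (Ab *v (Gi *v xv p mb y)))"
  define mm where "mm = (\<lambda>x. yv q m x \<bullet> (pb - Ab *v (Gi *v (A *v pb))))"
  define s where "s = (\<lambda>y. qb \<bullet> (Gi *v xv p mb y))"
  have Pe: "P x y = l x * r y + mm x * s y" if "admissible m mb x" "admissible m mb y" for x y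
  proof -
    have "1 - (y + x) * (yv q m x \<bullet> (Ab *v (Gi *v xv p mb y))) =
     (1 + yv q m x \<bullet> (Ab *v (Gi *v p))) * (1 - q \<bullet> (Ab *v (Gi *v xv p mb y)))
     + (yv q m x \<bullet> (pb - Ab *v (Gi *v (A *v pb)))) * (qb \<bullet> (Gi *v xv p mb y))"
      unfolding Gi_def G_def
      by (rule Wrel[OF Sy1 Sy2 inv[unfolded G_def] adm_x[OF that(2)] adm_y[OF that(1)]])
    then show ?thesis unfolding P_def W_def l_def r_def mm_def s_def by (simp add: add.commute)
  qed
  have wl: "(z v* Ab) \<bullet> (Gi *v x) = z \<bullet> (Ab *v (Gi *v x))" for z x
    by (rule dot_lmul_matrix)
  have t0: "tau m mb A Ab {} = det G" unfolding G_def by (rule tau_empty)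
  have t1: "tau m mb A Ab {x} = det G * P x x" if hx: "admissible m mb x" for x
  proof -
    have "tau m mb A Ab {x} = det (mat 1 + (diagm (\<chi> i. (mb$i + x) / (mb$i - x)) ** A **
            diagm (\<chi> i. (m$i - x) / (m$i + x))) ** Ab)"
      using tau_explicit[of "{x}" m mb A Ab] hx by simp
    also have "\<dots> = det (G + outer (xv p mb x) (((-2*x) *\<^sub>R yv q m x) v* Ab))"
      unfolding AX1[OF Sy1 hx] upd1 G_def ..
    also have "\<dots> = det G * (1 + (((-2*x) *\<^sub>R yv q m x) v* Ab) \<bullet> (Gi *v xv p mb x))"
      unfolding Gi_def by (rule R1[OF inv])
    also have "\<dots> = det G * P x x" unfolding wl P_def W_def by simp
    finally show ?thesis .
  qed
  have t2: "tau m mb A Ab {x, y} = det G * T2 x y (P x x) (P x y) (P y x) (P y y)"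
    if hx: "admissible m mb x" and hy: "admissible m mb y" and xy: "x \<noteq> y"
      and gxy: "det (mat 1 + (A + outer (xv p mb x) (z2f q m x y)) ** Ab) \<noteq> 0" for x y
  proof -
    have "tau m mb A Ab {x, y} = det (mat 1 + (diagm (\<chi> i. (mb$i + x) / (mb$i - x) * ((mb$i + y) / (mb$i - y))) ** A **
            diagm (\<chi> i. (m$i - x) / (m$i + x) * ((m$i - y) / (m$i + y)))) ** Ab)"
    proof -
      have fa: "\<And>z. z \<in> {x, y} \<Longrightarrow> admissible m mb z" using hx hy by auto
      show ?thesis using tau_explicit[of "{x, y}" m mb A Ab, OF _ fa] xy by simp
    qed
    also have "\<dots> = det (G + outer (xv p mb x) (z2f q m x y v* Ab) + outer (xv p mb y) (z2s q m x y v* Ab))"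
      unfolding AX2[OF Sy1 hx hy xy] upd2 G_def ..
    also have "\<dots> = det G *
     ((1 + (z2f q m x y v* Ab) \<bullet> (Gi *v xv p mb x)) * (1 + (z2s q m x y v* Ab) \<bullet> (Gi *v xv p mb y))
       - ((z2f q m x y v* Ab) \<bullet> (Gi *v xv p mb y)) * ((z2s q m x y v* Ab) \<bullet> (Gi *v xv p mb x)))"
      unfolding Gi_def
      by (rule R2[OF inv]) (use gxy in \<open>simp add: upd1 G_def\<close>)
    also have "\<dots> = det G * ((1 + (cd2 x y * W x x + co2 x y * W y x)) * (1 + (co2 x y * W x y + cd2 y x * W y y))
     - (cd2 x y * W x y + co2 x y * W y y) * (co2 x y * W x x + cd2 y x * W y x))"
      unfolding wl W_def z2f_def z2s_def by (simp add: inner_add_left)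
    also have "\<dots> = det G * T2 x y (P x x) (P x y) (P y x) (P y y)"
      unfolding P_def by (subst S1_2[OF xy]) (rule refl)
    finally show ?thesis .
  qed
  have t3: "tau m mb A Ab {a, b, c} = det G * T3 a b c (P a a) (P a b) (P a c) (P b a) (P b b) (P b c) (P c a) (P c b) (P c c)"
  proof -
    have "tau m mb A Ab {a, b, c} = det (mat 1 + (diagm (\<chi> i. (mb$i + a) / (mb$i - a) * ((mb$i + b) / (mb$i - b) * ((mb$i + c) / (mb$i - c)))) ** A **
         diagm (\<chi> i. (m$i - a) / (m$i + a) * ((m$i - b) / (m$i + b) * ((m$i - c) / (m$i + c))))) ** Ab)"
    proof -
      have fa: "\<And>z. z \<in> {a, b, c} \<Longrightarrow> admissible m mb z" using ha hb hc by auto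
      show ?thesis using tau_explicit[of "{a, b, c}" m mb A Ab, OF _ fa] ab ac bc by simp
    qed
    also have "\<dots> = det (G + outer (xv p mb a) (z3a q m a b c v* Ab) + outer (xv p mb b) (z3b q m a b c v* Ab)
         + outer (xv p mb c) (z3c q m a b c v* Ab))"
      unfolding AX3[OF Sy1 ha hb hc ab ac bc] upd3 G_def ..
    also have "\<dots> = det G * det3p
       ((z3a q m a b c v* Ab) \<bullet> (Gi *v xv p mb a)) ((z3a q m a b c v* Ab) \<bullet> (Gi *v xv p mb b)) ((z3a q m a b c v* Ab) \<bullet> (Gi *v xv p mb c))
       ((z3b q m a b c v* Ab) \<bullet> (Gi *v xv p mb a)) ((z3b q m a b c v* Ab) \<bullet> (Gi *v xv p mb b)) ((z3b q m a b c v* Ab) \<bullet> (Gi *v xv p mb c))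
       ((z3c q m a b c v* Ab) \<bullet> (Gi *v xv p mb a)) ((z3c q m a b c v* Ab) \<bullet> (Gi *v xv p mb b)) ((z3c q m a b c v* Ab) \<bullet> (Gi *v xv p mb c))"
      unfolding Gi_def
      by (rule R3[OF inv]) (use g3a g3b in \<open>simp_all add: upd1 upd2 G_def\<close>)
    also have "\<dots> = det G * det3p (cd a b c * W a a + co a b c * W b a + co a c b * W c a)
               (cd a b c * W a b + co a b c * W b b + co a c b * W c b)
               (cd a b c * W a c + co a b c * W b c + co a c b * W c c)
               (co a b c * W a a + cd b a c * W b a + co b c a * W c a)
               (co a b c * W a b + cd b a c * W b b + co b c a * W c b)
               (co a b c * W a c + cd b a c * W b c + co b c a * W c c)
               (co a c b * W a a + co b c a * W b a + cd c a b * W c a)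
               (co a c b * W a b + co b c a * W b b + cd c a b * W c b)
               (co a c b * W a c + co b c a * W b c + cd c a b * W c c)"
      unfolding wl W_def z3a_def z3b_def z3c_def by (simp add: inner_add_left)
    also have "\<dots> = det G * T3 a b c (P a a) (P a b) (P a c) (P b a) (P b b) (P b c) (P c a) (P c b) (P c c)"
      unfolding P_def by (subst S1_3[OF ab ac bc a0 b0 c0 sab sac sbc]) (rule refl)
    finally show ?thesis .
  qed
  have key: "T3 a b c (P a a) (P a b) (P a c) (P b a) (P b b) (P b c) (P c a) (P c b) (P c c) =
     Gam a b c * P a a * T2 b c (P b b) (P b c) (P c b) (P c c)
   + Gam b a c * P b b * T2 a c (P a a) (P a c) (P c a) (P c c)
   + Gam c a b * P c c * T2 a b (P a a) (P a b) (P b a) (P b b)"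
    using S2[OF ab ac bc, of l r mm s] unfolding Pe[OF ha ha] Pe[OF ha hb] Pe[OF ha hc]
       Pe[OF hb ha] Pe[OF hb hb] Pe[OF hb hc] Pe[OF hc ha] Pe[OF hc hb] Pe[OF hc hc] .
  show ?thesis
    unfolding t0 t3 t1[OF ha] t1[OF hb] t1[OF hc] t2[OF hb hc bc gbc] t2[OF ha hc ac gac] t2[OF ha hb ab gab]
    unfolding key by (simp add: algebra_simps)
qed


lemma det_poly: fixes K :: "real^'n^'n"
  shows "\<exists>p. (\<forall>t. det (mat 1 + t *\<^sub>R K) = poly p t) \<and> poly p 0 = 1"
proof -
  define p where "p = (\<Sum>\<sigma>\<in>{\<sigma>. \<sigma> permutes (UNIV::'n set)}.
      [:of_int (sign \<sigma>):] * (\<Prod>i\<in>UNIV. [:(mat 1 :: real^'n^'n) $ i $ \<sigma> i, K $ i $ \<sigma> i:]))"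
  have e: "det (mat 1 + t *\<^sub>R K) = poly p t" for t
    unfolding det_def p_def by (simp add: poly_sum poly_prod mult.commute)
  moreover have "poly p 0 = 1" using e[of 0] by simp
  ultimately show ?thesis by blast
qed

lemma det_finite_zeros: fixes K :: "real^'n^'n"
  shows "finite {t. det (mat 1 + t *\<^sub>R K) = 0}"
proof -
  obtain p where p: "\<And>t. det (mat 1 + t *\<^sub>R K) = poly p t" "poly p 0 = 1" using det_poly by blast
  then have "p \<noteq> 0" by auto
  then show ?thesis unfolding p(1) by (rule poly_roots_finite)
qed

lemma mm_scaleR_r: "(A::real^'n^'m) ** (t *\<^sub>R B) = t *\<^sub>R (A ** B)"
  by (simp add: vec_eq_iff matrix_matrix_mult_def sum_distrib_left mult_ac)
lemma mm_scaleR_l: "(t *\<^sub>R (A::real^'n^'m)) ** B = t *\<^sub>R (A ** B)"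
  by (simp add: vec_eq_iff matrix_matrix_mult_def sum_distrib_left mult_ac)

lemma tau_scale: "tau m mb A (t *\<^sub>R Ab) X = det (mat 1 + t *\<^sub>R (A ** setprod_mat (Hmat m) X ** Ab ** setprod_mat (Hbarmat mb) X))"
  unfolding tau_def by (simp add: mm_scaleR_r mm_scaleR_l)

lemma tau_poly: "\<exists>p. \<forall>t. tau m mb A (t *\<^sub>R Ab) X = poly p t"
  unfolding tau_scale using det_poly by blast

lemma PT:
  fixes m mb p q pb qb :: "real^'n" and A Ab :: "real^'n^'n" and a b c :: real
  assumes Sy1: "diagm mb ** A - A ** diagm m = outer p q"
    and Sy2: "diagm m ** Ab - Ab ** diagm mb = outer pb qb"
    and ha: "admissible m mb a" and hb: "admissible m mb b" and hc: "admissible m mb c"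
    and ab: "a \<noteq> b" and ac: "a \<noteq> c" and bc: "b \<noteq> c"
    and a0: "a \<noteq> 0" and b0: "b \<noteq> 0" and c0: "c \<noteq> 0"
    and sab: "a + b \<noteq> 0" and sac: "a + c \<noteq> 0" and sbc: "b + c \<noteq> 0"
  shows "tau m mb A Ab {} * tau m mb A Ab {a, b, c} =
           Gam a b c * tau m mb A Ab {a} * tau m mb A Ab {b, c}
         + Gam b a c * tau m mb A Ab {b} * tau m mb A Ab {a, c}
         + Gam c a b * tau m mb A Ab {c} * tau m mb A Ab {a, b}"
proof -
  define F where "F = (\<lambda>t. tau m mb A (t *\<^sub>R Ab) {} * tau m mb A (t *\<^sub>R Ab) {a, b, c} -
          (Gam a b c * tau m mb A (t *\<^sub>R Ab) {a} * tau m mb A (t *\<^sub>R Ab) {b, c}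
         + Gam b a c * tau m mb A (t *\<^sub>R Ab) {b} * tau m mb A (t *\<^sub>R Ab) {a, c}
         + Gam c a b * tau m mb A (t *\<^sub>R Ab) {c} * tau m mb A (t *\<^sub>R Ab) {a, b}))"
  obtain p0 where p0: "\<And>t. tau m mb A (t *\<^sub>R Ab) {} = poly p0 t" using tau_poly by blast
  obtain p3 where p3: "\<And>t. tau m mb A (t *\<^sub>R Ab) {a, b, c} = poly p3 t" using tau_poly by blast
  obtain pa where pa: "\<And>t. tau m mb A (t *\<^sub>R Ab) {a} = poly pa t" using tau_poly by blast
  obtain pb' where pb': "\<And>t. tau m mb A (t *\<^sub>R Ab) {b} = poly pb' t" using tau_poly by blast
  obtain pc where pc: "\<And>t. tau m mb A (t *\<^sub>R Ab) {c} = poly pc t" using tau_poly by blast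
  obtain pbc where pbc: "\<And>t. tau m mb A (t *\<^sub>R Ab) {b, c} = poly pbc t" using tau_poly by blast
  obtain pac where pac: "\<And>t. tau m mb A (t *\<^sub>R Ab) {a, c} = poly pac t" using tau_poly by blast
  obtain pab where pab: "\<And>t. tau m mb A (t *\<^sub>R Ab) {a, b} = poly pab t" using tau_poly by blast
  define Q where "Q = p0 * p3 - (smult (Gam a b c) (pa * pbc) + smult (Gam b a c) (pb' * pac) + smult (Gam c a b) (pc * pab))"
  have FQ: "F t = poly Q t" for t
    unfolding F_def Q_def p0 p3 pa pb' pc pbc pac pab by (simp add: mult_ac)
  define K0 where "K0 = A ** Ab"
  define K1 where "K1 = (A + outer (xv p mb b) (z2f q m b c)) ** Ab"
  define K2 where "K2 = (A + outer (xv p mb a) (z2f q m a c)) ** Ab"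
  define K3 where "K3 = (A + outer (xv p mb a) (z2f q m a b)) ** Ab"
  define K4 where "K4 = (A + outer (xv p mb a) (z3a q m a b c)) ** Ab"
  define K5 where "K5 = (A + outer (xv p mb a) (z3a q m a b c) + outer (xv p mb b) (z3b q m a b c)) ** Ab"
  define B where "B = {t. det (mat 1 + t *\<^sub>R K0) = 0} \<union> {t. det (mat 1 + t *\<^sub>R K1) = 0} \<union>
     {t. det (mat 1 + t *\<^sub>R K2) = 0} \<union> {t. det (mat 1 + t *\<^sub>R K3) = 0} \<union>
     {t. det (mat 1 + t *\<^sub>R K4) = 0} \<union> {t. det (mat 1 + t *\<^sub>R K5) = 0}"
  have fB: "finite B" unfolding B_def by (simp add: det_finite_zeros)
  have F0: "F t = 0" if "t \<notin> B" for t
  proof -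
    have Sy2t: "diagm m ** (t *\<^sub>R Ab) - (t *\<^sub>R Ab) ** diagm mb = outer (t *\<^sub>R pb) qb"
    proof -
      have "diagm m ** (t *\<^sub>R Ab) - (t *\<^sub>R Ab) ** diagm mb = t *\<^sub>R (diagm m ** Ab - Ab ** diagm mb)"
        by (simp add: mm_scaleR_r mm_scaleR_l scaleR_diff_right)
      also have "\<dots> = outer (t *\<^sub>R pb) qb" unfolding Sy2 by (simp add: vec_eq_iff)
      finally show ?thesis .
    qed
    have "tau m mb A (t *\<^sub>R Ab) {} * tau m mb A (t *\<^sub>R Ab) {a, b, c} =
           Gam a b c * tau m mb A (t *\<^sub>R Ab) {a} * tau m mb A (t *\<^sub>R Ab) {b, c}
         + Gam b a c * tau m mb A (t *\<^sub>R Ab) {b} * tau m mb A (t *\<^sub>R Ab) {a, c}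
         + Gam c a b * tau m mb A (t *\<^sub>R Ab) {c} * tau m mb A (t *\<^sub>R Ab) {a, b}"
      by (rule GL[OF Sy1 Sy2t ha hb hc ab ac bc a0 b0 c0 sab sac sbc])
         (use that in \<open>simp_all add: B_def K0_def K1_def K2_def K3_def K4_def K5_def mm_scaleR_r\<close>)
    then show ?thesis unfolding F_def by simp
  qed
  have "Q = 0"
  proof (rule ccontr)
    assume "Q \<noteq> 0"
    then have "finite {t. poly Q t = 0}" by (rule poly_roots_finite)
    moreover have "UNIV - B \<subseteq> {t. poly Q t = 0}" using F0 FQ by auto
    ultimately have "finite (UNIV - B)" by (rule finite_subset[rotated])
    then have "finite (UNIV :: real set)" using fB by (metis Diff_UNIV finite_Diff2 finite_UnI Un_Diff_cancel2 sup_top_right)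
    then show False using infinite_UNIV_char_0[where 'a=real] by simp
  qed
  then have "F 1 = 0" using FQ by simp
  then show ?thesis unfolding F_def by simp
qed


lemma zero_by_cont:
  fixes f :: "real \<Rightarrow> real"
  assumes "continuous (at x0) f" "finite F" "\<And>x. x \<notin> F \<Longrightarrow> f x = 0"
  shows "f x0 = 0"
proof -
  have op: "open (UNIV - (F - {x0}))" using assms(2) by (intro open_Diff) (auto intro: finite_imp_closed)
  have ev: "eventually (\<lambda>y. y \<in> (UNIV - (F - {x0})) - {x0}) (at x0)"
    by (rule eventually_at_in_open[OF op]) simp
  have ev2: "eventually (\<lambda>y. f y = 0) (at x0)"
    using ev by eventually_elim (use assms(3) in auto)
  have t1: "(f \<longlongrightarrow> f x0) (at x0)" using assms(1) continuous_at by blast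
  have t2: "(f \<longlongrightarrow> 0) (at x0)"
    using ev2 by (rule tendsto_eventually)
  show ?thesis using tendsto_unique[OF at_neq_bot t1 t2] .
qed

definition Edet :: "real^'n^'n \<Rightarrow> real^'n^'n \<Rightarrow> real^'n \<Rightarrow> real^'n \<Rightarrow> real" where
  "Edet A Ab u v = det (mat 1 + (diagm u ** A ** diagm v) ** Ab)"
definition hbv :: "real^'n \<Rightarrow> real \<Rightarrow> real^'n" where "hbv mb x = (\<chi> i. (mb$i + x) / (mb$i - x))"
definition hv :: "real^'n \<Rightarrow> real \<Rightarrow> real^'n" where "hv m x = (\<chi> i. (m$i - x) / (m$i + x))"

lemma Edet_entry: fixes A Ab :: "real^'n^'n" shows "(mat 1 + (diagm u ** A ** diagm v) ** Ab) $ i $ j =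
   mat 1 $ i $ j + (\<Sum>k\<in>UNIV. u$i * A$i$k * v$k * Ab$k$j)"
proof -
  have e: "(diagm u ** A ** diagm v) $ i $ k = u$i * A$i$k * v$k" for k
    by (simp only: diagm_mult_right diagm_mult_left)
  have mm: "(X ** Ab) $ i $ j = (\<Sum>k\<in>UNIV. X$i$k * Ab$k$j)" for X :: "real^'n^'n"
    by (simp add: matrix_matrix_mult_def)
  show ?thesis by (simp only: vector_add_component mm e)
qed

lemma cont_Edet:
  fixes u v :: "real \<Rightarrow> real^'n"
  assumes "\<And>i. continuous (at x0) (\<lambda>x. u x $ i)" "\<And>i. continuous (at x0) (\<lambda>x. v x $ i)"
  shows "continuous (at x0) (\<lambda>x. Edet A Ab (u x) (v x))"
  unfolding Edet_def det_def Edet_entry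
  by (intro continuous_intros assms)

lemma cont_hbv: "mb$i \<noteq> x0 \<Longrightarrow> continuous (at x0) (\<lambda>x. hbv mb x $ i)"
  unfolding hbv_def by (auto intro!: continuous_intros)
lemma cont_hv: "m$i + x0 \<noteq> 0 \<Longrightarrow> continuous (at x0) (\<lambda>x. hv m x $ i)"
  unfolding hv_def by (auto intro!: continuous_intros)

lemma tau1E: assumes "admissible m mb x"
  shows "tau m mb A Ab {x} = Edet A Ab (hbv mb x) (hv m x)"
  using tau_explicit[of "{x}" m mb A Ab] assms by (simp add: Edet_def hbv_def hv_def)

lemma tau2E: assumes "admissible m mb x" "admissible m mb y" "x \<noteq> y"
  shows "tau m mb A Ab {x, y} = Edet A Ab (\<chi> i. hbv mb x $ i * hbv mb y $ i) (\<chi> i. hv m x $ i * hv m y $ i)"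
proof -
  have fa: "\<And>z. z \<in> {x, y} \<Longrightarrow> admissible m mb z" using assms by auto
  show ?thesis using tau_explicit[of "{x, y}" m mb A Ab, OF _ fa] assms(3) by (simp add: Edet_def hbv_def hv_def)
qed

lemma tau3E: assumes "admissible m mb x" "admissible m mb y" "admissible m mb z" "x \<noteq> y" "x \<noteq> z" "y \<noteq> z"
  shows "tau m mb A Ab {x, y, z} = Edet A Ab (\<chi> i. hbv mb x $ i * (hbv mb y $ i * hbv mb z $ i))
        (\<chi> i. hv m x $ i * (hv m y $ i * hv m z $ i))"
proof -
  have fa: "\<And>w. w \<in> {x, y, z} \<Longrightarrow> admissible m mb w" using assms by auto
  show ?thesis using tau_explicit[of "{x, y, z}" m mb A Ab, OF _ fa] assms(4-6) by (simp add: Edet_def hbv_def hv_def)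
qed

lemma finite_nonadm: "finite {z. \<not> admissible m mb z}"
proof -
  have "{z. \<not> admissible m mb z} \<subseteq> range (\<lambda>j. m$j) \<union> range (\<lambda>j. - m$j) \<union> range (\<lambda>j. mb$j) \<union> range (\<lambda>j. - mb$j)"
    unfolding admissible_def by auto
  then show ?thesis by (rule finite_subset) auto
qed


definition I3 :: "real^'n \<Rightarrow> real^'n \<Rightarrow> real^'n^'n \<Rightarrow> real^'n^'n \<Rightarrow> real \<Rightarrow> real \<Rightarrow> real \<Rightarrow> real" where
  "I3 m mb A Ab a b c =
     det (mat 1 + A ** Ab) * Edet A Ab (\<chi> i. hbv mb a $ i * (hbv mb b $ i * hbv mb c $ i)) (\<chi> i. hv m a $ i * (hv m b $ i * hv m c $ i))
   - (Gam a b c * Edet A Ab (hbv mb a) (hv m a) * Edet A Ab (\<chi> i. hbv mb b $ i * hbv mb c $ i) (\<chi> i. hv m b $ i * hv m c $ i)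
    + Gam b a c * Edet A Ab (hbv mb b) (hv m b) * Edet A Ab (\<chi> i. hbv mb a $ i * hbv mb c $ i) (\<chi> i. hv m a $ i * hv m c $ i)
    + Gam c a b * Edet A Ab (hbv mb c) (hv m c) * Edet A Ab (\<chi> i. hbv mb a $ i * hbv mb b $ i) (\<chi> i. hv m a $ i * hv m b $ i))"

lemma I3_tau:
  assumes "admissible m mb a" "admissible m mb b" "admissible m mb c" "a \<noteq> b" "a \<noteq> c" "b \<noteq> c"
  shows "(tau m mb A Ab {} * tau m mb A Ab {a, b, c} =
           Gam a b c * tau m mb A Ab {a} * tau m mb A Ab {b, c}
         + Gam b a c * tau m mb A Ab {b} * tau m mb A Ab {a, c}
         + Gam c a b * tau m mb A Ab {c} * tau m mb A Ab {a, b}) \<longleftrightarrow> I3 m mb A Ab a b c = 0"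
  unfolding I3_def tau_empty tau1E[OF assms(1)] tau1E[OF assms(2)] tau1E[OF assms(3)]
    tau2E[OF assms(2,3,6)] tau2E[OF assms(1,3,5)] tau2E[OF assms(1,2,4)] tau3E[OF assms]
  by simp

lemma cont_comp1: "admissible m mb x0 \<Longrightarrow> continuous (at x0) (\<lambda>x. Edet A Ab (hbv mb x) (hv m x))"
  by (intro cont_Edet cont_hbv cont_hv adm_x adm_y)

lemma cont_comp2:
  assumes "admissible m mb x0"
  shows "continuous (at x0) (\<lambda>x. Edet A Ab (\<chi> i. hbv mb x $ i * hbv mb y $ i) (\<chi> i. hv m x $ i * hv m y $ i))"
    "continuous (at x0) (\<lambda>x. Edet A Ab (\<chi> i. hbv mb y $ i * hbv mb x $ i) (\<chi> i. hv m y $ i * hv m x $ i))"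
proof -
  have h1: "continuous (at x0) (\<lambda>x. hbv mb x $ i)" for i by (rule cont_hbv[OF adm_x[OF assms]])
  have h2: "continuous (at x0) (\<lambda>x. hv m x $ i)" for i by (rule cont_hv[OF adm_y[OF assms]])
  show "continuous (at x0) (\<lambda>x. Edet A Ab (\<chi> i. hbv mb x $ i * hbv mb y $ i) (\<chi> i. hv m x $ i * hv m y $ i))"
    by (rule cont_Edet) (simp_all add: continuous_mult[OF h1 continuous_const] continuous_mult[OF h2 continuous_const])
  show "continuous (at x0) (\<lambda>x. Edet A Ab (\<chi> i. hbv mb y $ i * hbv mb x $ i) (\<chi> i. hv m y $ i * hv m x $ i))"
    by (rule cont_Edet) (simp_all add: continuous_mult[OF continuous_const h1] continuous_mult[OF continuous_const h2])
qed

lemma cont_comp3: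
  assumes "admissible m mb x0"
  shows "continuous (at x0) (\<lambda>x. Edet A Ab (\<chi> i. hbv mb x $ i * (hbv mb y $ i * hbv mb z $ i)) (\<chi> i. hv m x $ i * (hv m y $ i * hv m z $ i)))"
    "continuous (at x0) (\<lambda>x. Edet A Ab (\<chi> i. hbv mb y $ i * (hbv mb x $ i * hbv mb z $ i)) (\<chi> i. hv m y $ i * (hv m x $ i * hv m z $ i)))"
    "continuous (at x0) (\<lambda>x. Edet A Ab (\<chi> i. hbv mb y $ i * (hbv mb z $ i * hbv mb x $ i)) (\<chi> i. hv m y $ i * (hv m z $ i * hv m x $ i)))"
proof -
  have h1: "continuous (at x0) (\<lambda>x. hbv mb x $ i)" for i by (rule cont_hbv[OF adm_x[OF assms]])
  have h2: "continuous (at x0) (\<lambda>x. hv m x $ i)" for i by (rule cont_hv[OF adm_y[OF assms]])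
  show "continuous (at x0) (\<lambda>x. Edet A Ab (\<chi> i. hbv mb x $ i * (hbv mb y $ i * hbv mb z $ i)) (\<chi> i. hv m x $ i * (hv m y $ i * hv m z $ i)))"
    by (rule cont_Edet) (simp_all add: continuous_mult[OF h1 continuous_const] continuous_mult[OF h2 continuous_const])
  show "continuous (at x0) (\<lambda>x. Edet A Ab (\<chi> i. hbv mb y $ i * (hbv mb x $ i * hbv mb z $ i)) (\<chi> i. hv m y $ i * (hv m x $ i * hv m z $ i)))"
    by (rule cont_Edet) (simp_all add: continuous_mult[OF continuous_const continuous_mult[OF h1 continuous_const]]
          continuous_mult[OF continuous_const continuous_mult[OF h2 continuous_const]])
  show "continuous (at x0) (\<lambda>x. Edet A Ab (\<chi> i. hbv mb y $ i * (hbv mb z $ i * hbv mb x $ i)) (\<chi> i. hv m y $ i * (hv m z $ i * hv m x $ i)))"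
    by (rule cont_Edet) (simp_all add: continuous_mult[OF continuous_const continuous_mult[OF continuous_const h1]]
          continuous_mult[OF continuous_const continuous_mult[OF continuous_const h2]])
qed

lemma cont_Gam:
  fixes x0 y z :: real
  shows "x0 \<noteq> y \<Longrightarrow> x0 \<noteq> z \<Longrightarrow> continuous (at x0) (\<lambda>x. Gam x y z)"
    and "y \<noteq> x0 \<Longrightarrow> y \<noteq> z \<Longrightarrow> continuous (at x0) (\<lambda>x. Gam y x z)"
    and "y \<noteq> x0 \<Longrightarrow> y \<noteq> z \<Longrightarrow> continuous (at x0) (\<lambda>x. Gam y z x)"
  unfolding Gam_def by (auto intro!: continuous_intros)

lemma stepA:
  assumes Sy1: "diagm mb ** A - A ** diagm m = outer p q"
    and Sy2: "diagm m ** Ab - Ab ** diagm mb = outer pb qb"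
    and hb: "admissible m mb b" and hc: "admissible m mb c" and bc: "b \<noteq> c"
    and b0: "b \<noteq> 0" and c0: "c \<noteq> 0" and sbc: "b + c \<noteq> 0"
    and ha: "admissible m mb a" and ab: "a \<noteq> b" and ac: "a \<noteq> c"
  shows "I3 m mb A Ab a b c = 0"
proof (rule zero_by_cont[where f = "\<lambda>x. I3 m mb A Ab x b c" and F = "{z. \<not> admissible m mb z} \<union> {b, c, 0, -b, -c}"])
  show "continuous (at a) (\<lambda>x. I3 m mb A Ab x b c)"
    unfolding I3_def
    using ab ac bc by (intro continuous_intros cont_comp1[OF ha] cont_comp2[OF ha] cont_comp3[OF ha] cont_Gam) auto
  show "finite ({z. \<not> admissible m mb z} \<union> {b, c, 0, -b, -c})" using finite_nonadm by simp
  fix x assume "x \<notin> {z. \<not> admissible m mb z} \<union> {b, c, 0, -b, -c}"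
  then have hx: "admissible m mb x" and "x \<noteq> b" "x \<noteq> c" "x \<noteq> 0" "x + b \<noteq> 0" "x + c \<noteq> 0"
    by (auto simp: add_eq_0_iff)
  then show "I3 m mb A Ab x b c = 0"
    using PT[OF Sy1 Sy2 hx hb hc _ _ bc _ b0 c0 _ _ sbc] I3_tau[OF hx hb hc _ _ bc] by auto
qed

lemma stepB:
  assumes Sy1: "diagm mb ** A - A ** diagm m = outer p q"
    and Sy2: "diagm m ** Ab - Ab ** diagm mb = outer pb qb"
    and hc: "admissible m mb c" and c0: "c \<noteq> 0"
    and ha: "admissible m mb a" and hb: "admissible m mb b"
    and ab: "a \<noteq> b" and ac: "a \<noteq> c" and bc: "b \<noteq> c"
  shows "I3 m mb A Ab a b c = 0"
proof (rule zero_by_cont[where f = "\<lambda>y. I3 m mb A Ab a y c" and F = "{z. \<not> admissible m mb z} \<union> {a, c, 0, -c}"])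
  show "continuous (at b) (\<lambda>y. I3 m mb A Ab a y c)"
    unfolding I3_def
    using ab ac bc by (intro continuous_intros cont_comp1[OF hb] cont_comp2[OF hb] cont_comp3[OF hb] cont_Gam) auto
  show "finite ({z. \<not> admissible m mb z} \<union> {a, c, 0, -c})" using finite_nonadm by simp
  fix y assume "y \<notin> {z. \<not> admissible m mb z} \<union> {a, c, 0, -c}"
  then have hy: "admissible m mb y" and "y \<noteq> a" "y \<noteq> c" "y \<noteq> 0" "y + c \<noteq> 0"
    by (auto simp: add_eq_0_iff)
  then show "I3 m mb A Ab a y c = 0"
    using stepA[OF Sy1 Sy2 hy hc _ _ c0 _ ha _ ac] by auto
qed

lemma stepC:
  assumes Sy1: "diagm mb ** A - A ** diagm m = outer p q"
    and Sy2: "diagm m ** Ab - Ab ** diagm mb = outer pb qb"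
    and ha: "admissible m mb a" and hb: "admissible m mb b" and hc: "admissible m mb c"
    and ab: "a \<noteq> b" and ac: "a \<noteq> c" and bc: "b \<noteq> c"
  shows "I3 m mb A Ab a b c = 0"
proof (rule zero_by_cont[where f = "\<lambda>z. I3 m mb A Ab a b z" and F = "{z. \<not> admissible m mb z} \<union> {a, b, 0}"])
  show "continuous (at c) (\<lambda>z. I3 m mb A Ab a b z)"
    unfolding I3_def
    using ab ac bc by (intro continuous_intros cont_comp1[OF hc] cont_comp2[OF hc] cont_comp3[OF hc] cont_Gam) auto
  show "finite ({z. \<not> admissible m mb z} \<union> {a, b, 0})" using finite_nonadm by simp
  fix z assume "z \<notin> {z. \<not> admissible m mb z} \<union> {a, b, 0}"
  then have hz: "admissible m mb z" and "z \<noteq> a" "z \<noteq> b" "z \<noteq> 0"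
    by auto
  then show "I3 m mb A Ab a b z = 0"
    using stepB[OF Sy1 Sy2 hz _ ha hb ab] by auto
qed

theorem proposition1:
  fixes m mb p pb q qb :: "real ^ 'n"
    and A Ab :: "real ^ 'n ^ 'n"
    and a b c :: real
  assumes "diagm mb ** A - A ** diagm m = outer p q"
    and "diagm m ** Ab - Ab ** diagm mb = outer pb qb"
    and "admissible m mb a" and "admissible m mb b" and "admissible m mb c"
    and "a \<noteq> b" and "a \<noteq> c" and "b \<noteq> c"
  shows "tau m mb A Ab {} * tau m mb A Ab {a, b, c} =
           Gam a b c * tau m mb A Ab {a} * tau m mb A Ab {b, c}
         + Gam b a c * tau m mb A Ab {b} * tau m mb A Ab {a, c}
         + Gam c a b * tau m mb A Ab {c} * tau m mb A Ab {a, b}"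
  using I3_tau[OF assms(3-8)] stepC[OF assms] by simp


end
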